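(* Let $T>0$ and let $U_t=(U^1_t,U^2_t)$ with $U^1,U^2\in C^1(\mathbb{R})$ and $U^1_0=U^2_0=0$. Consider the control problem $d\tilde x_t=-\gamma\tilde x_t\,dt-\frac{h\tilde x_t^2-\tilde y_t^2}{\tilde z_t}\,dt+\sqrt{2\kappa_1}\,dU^1_t$, $d\tilde y_t=-\gamma\tilde y_t\,dt-(1+h)\frac{\tilde x_t\tilde y_t}{\tilde z_t}\,dt+\sqrt{2\kappa_2}\,dU^2_t$, $d\tilde z_t=(1-h)\tilde x_t\,dt-d\tilde k_t$, where $\tilde{\mathbf{x}}_t=(\tilde x_t,\tilde y_t,\tilde z_t)\in\mathcal{O}$ and $\tilde k_t$ is continuous, non-decreasing, $\tilde k_0=0$, increasing only when $\tilde z_t=1$. Suppose $(\tilde{\mathbf{x}}_t,\tilde k_t)$ solves this control problem with $\tilde{\mathbf{x}}_0=\tilde{\mathbf{x}}$ and $(\mathbf{x}_t,k_t)$ solves the stochastic reflected system below with $\mathbf{x}_0=\mathbf{x}$, both on the deterministic time interval $[0,T]$. Then for every $\varepsilon>0$ there exists $\tilde\varepsilon>0$ such that for all $\mathbf{x}\in B(\tilde{\mathbf{x}},\tilde\varepsilon)$, $\mathbb{P}\left\{\sup_{0\le t\le T}|\mathbf{x}_t-\tilde{\mathbf{x}}_t|\le\varepsilon\right\}>0.$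
   Context: Let $\mathcal{O}=\mathbb{R}\times\mathbb{R}\times(0,1]$, $\gamma>0$, $h\in(0,1)$, $\kappa_1,\kappa_2>0$, $(W^1_t,W^2_t)$ a standard two-dimensional Brownian motion. The stochastic reflected system is $dx_t=-\gamma x_t\,dt-\frac{hx_t^2-y_t^2}{z_t}\,dt+\sqrt{2\kappa_1}\,dW^1_t$, $dy_t=-\gamma y_t\,dt-(1+h)\frac{x_ty_t}{z_t}\,dt+\sqrt{2\kappa_2}\,dW^2_t$, $dz_t=(1-h)x_t\,dt-dk_t$, with $\mathbf{x}_t=(x_t,y_t,z_t)\in\mathcal{O}$ and $k_t$ continuous, non-decreasing, adapted, $k_0=0$, increasing only when $z_t=1$. $B(\mathbf{y},\varepsilon)$ is the open ball in $\mathbb{R}^3$. *)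

theory Defs
  imports "HOL-Probability.Probability"
begin

definition state_space :: "(real \<times> real \<times> real) set" where
  "state_space = {p. 0 < snd (snd p) \<and> snd (snd p) \<le> 1}"

definition std_BM2 :: "'a measure \<Rightarrow> (real \<Rightarrow> 'a \<Rightarrow> real) \<Rightarrow> (real \<Rightarrow> 'a \<Rightarrow> real) \<Rightarrow> bool" where
  "std_BM2 M W1 W2 \<longleftrightarrow>
     prob_space M \<and>
     (\<forall>t\<ge>0. W1 t \<in> borel_measurable M \<and> W2 t \<in> borel_measurable M) \<and>
     (\<forall>\<omega>\<in>space M. W1 0 \<omega> = 0 \<and> W2 0 \<omega> = 0 \<and>
        continuous_on {0..} (\<lambda>t. W1 t \<omega>) \<and> continuous_on {0..} (\<lambda>t. W2 t \<omega>)) \<and>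
     (\<forall>(n::nat) (\<tau>::nat \<Rightarrow> real). 0 \<le> \<tau> 0 \<and> (\<forall>i<n. \<tau> i < \<tau> (Suc i)) \<longrightarrow>
        prob_space.indep_vars M (\<lambda>_. borel)
          (\<lambda>(b, i) \<omega>. (if b then W1 else W2) (\<tau> (Suc i)) \<omega> - (if b then W1 else W2) (\<tau> i) \<omega>)
          (UNIV \<times> {..<n}) \<and>
        (\<forall>i<n. distributed M lborel (\<lambda>\<omega>. W1 (\<tau> (Suc i)) \<omega> - W1 (\<tau> i) \<omega>)
                   (\<lambda>v. ennreal (normal_density 0 (sqrt (\<tau> (Suc i) - \<tau> i)) v)) \<and>
               distributed M lborel (\<lambda>\<omega>. W2 (\<tau> (Suc i)) \<omega> - W2 (\<tau> i) \<omega>)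
                   (\<lambda>v. ennreal (normal_density 0 (sqrt (\<tau> (Suc i) - \<tau> i)) v))))"

definition reflection_term :: "real \<Rightarrow> (real \<Rightarrow> real) \<Rightarrow> (real \<Rightarrow> real) \<Rightarrow> bool" where
  "reflection_term T z k \<longleftrightarrow>
     k 0 = 0 \<and> continuous_on {0..T} k \<and> mono_on {0..T} k \<and>
     (\<forall>s t. 0 \<le> s \<longrightarrow> s \<le> t \<longrightarrow> t \<le> T \<longrightarrow> (\<forall>r\<in>{s..t}. z r \<noteq> 1) \<longrightarrow> k t = k s)"

text \<open>(x,y,z,k) solves the reflected system on [0,T] driven by the (continuous) signal (V1,V2),
  in integrated form: d x = drift dt + sqrt(2 kappa1) dV1, etc.\<close>
definition reflected_solution ::
  "real \<Rightarrow> real \<Rightarrow> real \<Rightarrow> real \<Rightarrow> real \<Rightarrow> (real \<Rightarrow> real) \<Rightarrow> (real \<Rightarrow> real) \<Rightarrow>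
   (real \<Rightarrow> real) \<Rightarrow> (real \<Rightarrow> real) \<Rightarrow> (real \<Rightarrow> real) \<Rightarrow> (real \<Rightarrow> real) \<Rightarrow> bool" where
  "reflected_solution \<gamma> h \<kappa>1 \<kappa>2 T V1 V2 x y z k \<longleftrightarrow>
     continuous_on {0..T} x \<and> continuous_on {0..T} y \<and> continuous_on {0..T} z \<and>
     (\<forall>t\<in>{0..T}. (x t, y t, z t) \<in> state_space) \<and>
     reflection_term T z k \<and>
     (\<forall>t\<in>{0..T}.
        x t = x 0 + integral {0..t} (\<lambda>s. - \<gamma> * x s - (h * (x s)\<^sup>2 - (y s)\<^sup>2) / z s)
                  + sqrt (2 * \<kappa>1) * (V1 t - V1 0) \<and>
        y t = y 0 + integral {0..t} (\<lambda>s. - \<gamma> * y s - (1 + h) * (x s * y s) / z s)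
                  + sqrt (2 * \<kappa>2) * (V2 t - V2 0) \<and>
        z t = z 0 + integral {0..t} (\<lambda>s. (1 - h) * x s) - (k t - k 0))"

end

theory Submission
  imports Defs
begin

lemma gronwall:
  fixes e :: "real \<Rightarrow> real"
  assumes t1: "0 \<le> t1" and ce: "continuous_on {0..t1} e" and B: "0 < B"
    and H: "\<And>t. t \<in> {0..t1} \<Longrightarrow> e t \<le> A + B * integral {0..t} e"
    and t: "t \<in> {0..t1}"
  shows "e t \<le> A * exp (B * t)"
proof -
  define G where "G u = A + B * integral {0..u} e" for u
  define Hf where "Hf u = G u * exp (- B * u)" for u
  have t0: "0 \<le> t" "t \<le> t1" using t by auto
  have intc: "continuous_on {0..t1} (\<lambda>u. integral {0..u} e)"
    by (rule indefinite_integral_continuous_1) (rule integrable_continuous_real[OF ce])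
  have cH: "continuous_on {0..t} Hf"
    unfolding Hf_def G_def
    by (intro continuous_intros continuous_on_subset[OF intc]) (use t0 in auto)
  have "Hf t \<le> Hf 0"
  proof (rule DERIV_nonpos_imp_decreasing_open[OF t0(1) _ cH])
    fix x assume x: "0 < x" "x < t"
    have d: "((\<lambda>u. integral {0..u} e) has_real_derivative e x) (at x)"
      using integral_has_vector_derivative[OF ce, of x] x t0
      by (simp add: has_real_derivative_iff_has_vector_derivative at_within_Icc_at)
    have dG: "(G has_real_derivative B * e x) (at x)"
      unfolding G_def[abs_def] by (auto intro!: derivative_eq_intros d)
    have dH: "(Hf has_real_derivative (B * e x * exp (- B * x) + G x * (exp (- B * x) * (- B)))) (at x)"
      unfolding Hf_def[abs_def] by (auto intro!: derivative_eq_intros dG)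
    have "e x \<le> G x" using H[of x] x t0 by (simp add: G_def)
    then have "B * e x * exp (- B * x) + G x * (exp (- B * x) * (- B)) \<le> 0"
      using B by (simp add: algebra_simps mult_left_mono)
    with dH show "\<exists>y. (Hf has_real_derivative y) (at x) \<and> y \<le> 0" by blast
  qed
  then have "G t * exp (- B * t) \<le> A" by (simp add: Hf_def G_def)
  then have "G t \<le> A * exp (B * t)"
    by (simp add: exp_minus field_simps)
  moreover have "e t \<le> G t" using H[OF t] by (simp add: G_def)
  ultimately show ?thesis by linarith
qed

lemma skorokhod_half:
  fixes z z' w w' k k' :: "real \<Rightarrow> real"
  assumes rk: "reflection_term T z k" and rk': "reflection_term T z' k'"
    and zw: "\<And>s. s \<in> {0..T} \<Longrightarrow> z s = w s - k s"
    and zw': "\<And>s. s \<in> {0..T} \<Longrightarrow> z' s = w' s - k' s"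
    and z'1: "\<And>s. s \<in> {0..T} \<Longrightarrow> z' s \<le> 1"
    and t: "t \<in> {0..T}"
    and m: "\<And>s. s \<in> {0..t} \<Longrightarrow> \<bar>w s - w' s\<bar> \<le> m"
  shows "k t - k' t \<le> m"
proof (rule ccontr)
  assume nt: "\<not> k t - k' t \<le> m"
  have k0: "k 0 = 0" and ck: "continuous_on {0..T} k" and mk: "mono_on {0..T} k"
    and kc: "\<And>s t. 0 \<le> s \<Longrightarrow> s \<le> t \<Longrightarrow> t \<le> T \<Longrightarrow> (\<forall>r\<in>{s..t}. z r \<noteq> 1) \<Longrightarrow> k t = k s"
    using rk unfolding reflection_term_def by blast+
  have k'0: "k' 0 = 0" and ck': "continuous_on {0..T} k'" and mk': "mono_on {0..T} k'"
    using rk' unfolding reflection_term_def by blast+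
  have t0: "0 \<le> t" "t \<le> T" using t by auto
  define A where "A = {0..t} \<inter> (\<lambda>s. k s - k' s) -` {..m}"
  have cd: "continuous_on {0..t} (\<lambda>s. k s - k' s)"
    by (intro continuous_intros continuous_on_subset[OF ck] continuous_on_subset[OF ck']) (use t0 in auto)
  have clA: "closed A" unfolding A_def
    by (rule continuous_closed_preimage[OF cd]) auto
  have m0: "0 \<le> m" using m[of 0] t0 by auto
  have A0: "0 \<in> A" using k0 k'0 m0 t0 by (simp add: A_def)
  have bA: "bdd_above A" unfolding A_def by (auto intro: bdd_aboveI[of _ t])
  define s0 where "s0 = Sup A"
  have s0A: "s0 \<in> A" unfolding s0_def by (rule closed_contains_Sup[OF _ bA clA]) (use A0 in auto)
  have s0t: "s0 \<le> t" using s0A by (auto simp: A_def)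
  have s00: "0 \<le> s0" using s0A by (auto simp: A_def)
  have tA: "t \<notin> A" using nt by (auto simp: A_def)
  have "s0 \<noteq> t" using s0A tA by metis
  with s0t have s0lt: "s0 < t" by simp
  have gt: "k s - k' s > m" if "s \<in> {s0<..t}" for s
  proof -
    have "s \<notin> A"
    proof
      assume "s \<in> A" then have "s \<le> s0" unfolding s0_def by (rule cSup_upper[OF _ bA])
      with that show False by auto
    qed
    moreover have "s \<in> {0..t}" using that s00 by auto
    ultimately have "\<not> (k s - k' s \<le> m)" unfolding A_def by blast
    then show ?thesis by linarith
  qed
  have zne: "z s \<noteq> 1" if "s \<in> {s0<..t}" for s
  proof -
    have sT: "s \<in> {0..T}" using that s00 t0 by auto
    have "z s = w s - k s" using zw[OF sT] .
    also have "\<dots> < w s - k' s - m" using gt[OF that] by linarith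
    also have "\<dots> \<le> w' s - k' s" using m[of s] that s00 by auto
    also have "\<dots> = z' s" using zw'[OF sT] by simp
    also have "\<dots> \<le> 1" using z'1[OF sT] .
    finally show ?thesis by simp
  qed
  have keq: "k s = k t" if "s \<in> {s0<..t}" for s
    using that s00 t0 by (intro kc[symmetric]) (auto intro!: zne)
  define B' where "B' = {s0..t} \<inter> (\<lambda>s. k s) -` {k t}"
  have clB: "closed B'" unfolding B'_def
    by (rule continuous_closed_preimage[OF continuous_on_subset[OF ck]]) (use s00 t0 in auto)
  have "{s0<..t} \<subseteq> B'"
  proof
    fix s assume s: "s \<in> {s0<..t}"
    have "k s = k t" by (rule keq[OF s])
    with s show "s \<in> B'" unfolding B'_def by simp
  qed
  then have "closure {s0<..t} \<subseteq> B'" using clB by (rule closure_minimal)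
  then have "{s0..t} \<subseteq> B'" using s0lt by (simp add: closure_greaterThanAtMost)
  then have "s0 \<in> B'" using s0lt by auto
  then have "k s0 = k t" by (simp add: B'_def)
  moreover have "k' s0 \<le> k' t" by (rule mono_onD[OF mk']) (use s00 s0t t0 in auto)
  ultimately have "k s0 - k' s0 > m" using nt by linarith
  with s0A show False by (auto simp: A_def)
qed

lemma quot_lip:
  fixes a a' z z' c :: real
  assumes c: "0 < c" and z: "c \<le> z" and z': "c \<le> z'"
  shows "\<bar>a / z - a' / z'\<bar> \<le> \<bar>a - a'\<bar> / c + \<bar>a'\<bar> * \<bar>z - z'\<bar> / c\<^sup>2"
proof -
  have zp: "0 < z" "0 < z'" using c z z' by auto
  have e: "a / z - a' / z' = (a - a') / z + a' * (z' - z) / (z * z')"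
    using zp by (simp add: field_simps)
  have 1: "\<bar>(a - a') / z\<bar> \<le> \<bar>a - a'\<bar> / c"
    using zp c z by (simp add: abs_div frac_le)
  have "c\<^sup>2 \<le> z * z'" using c z z' unfolding power2_eq_square by (intro mult_mono) auto
  then have 2: "\<bar>a' * (z' - z) / (z * z')\<bar> \<le> \<bar>a'\<bar> * \<bar>z - z'\<bar> / c\<^sup>2"
    using zp c by (simp add: abs_div abs_mult frac_le abs_minus_commute)
  show ?thesis unfolding e using 1 2 abs_triangle_ineq[of "(a - a') / z" "a' * (z' - z) / (z * z')"] by linarith
qed

lemma sq_lip:
  fixes x x' R :: real
  assumes "\<bar>x\<bar> \<le> R" "\<bar>x'\<bar> \<le> R"
  shows "\<bar>x\<^sup>2 - x'\<^sup>2\<bar> \<le> 2 * R * \<bar>x - x'\<bar>"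
proof -
  have "x\<^sup>2 - x'\<^sup>2 = (x + x') * (x - x')" by (simp add: algebra_simps power2_eq_square)
  then have "\<bar>x\<^sup>2 - x'\<^sup>2\<bar> = \<bar>x + x'\<bar> * \<bar>x - x'\<bar>" by (simp add: abs_mult)
  also have "\<dots> \<le> (2 * R) * \<bar>x - x'\<bar>" using assms by (intro mult_right_mono) auto
  finally show ?thesis by simp
qed

lemma prod_lip:
  fixes x x' y y' R :: real
  assumes "\<bar>x\<bar> \<le> R" "\<bar>y'\<bar> \<le> R"
  shows "\<bar>x * y - x' * y'\<bar> \<le> R * (\<bar>x - x'\<bar> + \<bar>y - y'\<bar>)"
proof -
  have "x * y - x' * y' = x * (y - y') + y' * (x - x')" by (simp add: algebra_simps)
  then have "\<bar>x * y - x' * y'\<bar> \<le> \<bar>x\<bar> * \<bar>y - y'\<bar> + \<bar>y'\<bar> * \<bar>x - x'\<bar>"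
    by (simp add: abs_mult[symmetric] abs_triangle_ineq)
  also have "\<dots> \<le> R * \<bar>y - y'\<bar> + R * \<bar>x - x'\<bar>" using assms
    by (intro add_mono mult_right_mono) auto
  finally show ?thesis by (simp add: algebra_simps)
qed

lemma drift1_lip:
  fixes \<gamma> h x y z x' y' z' R c :: real
  assumes g: "0 \<le> \<gamma>" and h: "0 \<le> h" "h \<le> 1" and c: "0 < c" and z: "c \<le> z" and z': "c \<le> z'"
    and R: "\<bar>x\<bar> \<le> R" "\<bar>x'\<bar> \<le> R" "\<bar>y\<bar> \<le> R" "\<bar>y'\<bar> \<le> R"
  shows "\<bar>(- \<gamma> * x - (h * x\<^sup>2 - y\<^sup>2) / z) - (- \<gamma> * x' - (h * x'\<^sup>2 - y'\<^sup>2) / z')\<bar>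
     \<le> (\<gamma> + 4 * R / c + 2 * R\<^sup>2 / c\<^sup>2) * (\<bar>x - x'\<bar> + \<bar>y - y'\<bar> + \<bar>z - z'\<bar>)"
proof -
  have R0: "0 \<le> R" using R by auto
  have q: "\<bar>(h * x\<^sup>2 - y\<^sup>2) / z - (h * x'\<^sup>2 - y'\<^sup>2) / z'\<bar>
     \<le> \<bar>(h * x\<^sup>2 - y\<^sup>2) - (h * x'\<^sup>2 - y'\<^sup>2)\<bar> / c + \<bar>h * x'\<^sup>2 - y'\<^sup>2\<bar> * \<bar>z - z'\<bar> / c\<^sup>2"
    by (rule quot_lip[OF c z z'])
  have a1: "\<bar>(h * x\<^sup>2 - y\<^sup>2) - (h * x'\<^sup>2 - y'\<^sup>2)\<bar> \<le> 2 * R * \<bar>x - x'\<bar> + 2 * R * \<bar>y - y'\<bar>"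
  proof -
    have "\<bar>(h * x\<^sup>2 - y\<^sup>2) - (h * x'\<^sup>2 - y'\<^sup>2)\<bar> \<le> h * \<bar>x\<^sup>2 - x'\<^sup>2\<bar> + \<bar>y\<^sup>2 - y'\<^sup>2\<bar>"
    proof -
      have "(h * x\<^sup>2 - y\<^sup>2) - (h * x'\<^sup>2 - y'\<^sup>2) = h * (x\<^sup>2 - x'\<^sup>2) - (y\<^sup>2 - y'\<^sup>2)" by (simp add: algebra_simps)
      then show ?thesis using abs_triangle_ineq4[of "h * (x\<^sup>2 - x'\<^sup>2)" "y\<^sup>2 - y'\<^sup>2"] h by (simp add: abs_mult)
    qed
    moreover have "h * \<bar>x\<^sup>2 - x'\<^sup>2\<bar> \<le> 2 * R * \<bar>x - x'\<bar>"
      using sq_lip[OF R(1,2)] h mult_left_le_one_le[of "\<bar>x\<^sup>2 - x'\<^sup>2\<bar>" h] by linarith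
    moreover have "\<bar>y\<^sup>2 - y'\<^sup>2\<bar> \<le> 2 * R * \<bar>y - y'\<bar>" using sq_lip[OF R(3,4)] .
    ultimately show ?thesis by linarith
  qed
  have a2: "\<bar>h * x'\<^sup>2 - y'\<^sup>2\<bar> \<le> 2 * R\<^sup>2"
  proof -
    have "\<bar>x'\<bar>\<^sup>2 \<le> R\<^sup>2" "\<bar>y'\<bar>\<^sup>2 \<le> R\<^sup>2" using R power_mono[of "\<bar>x'\<bar>" R 2] power_mono[of "\<bar>y'\<bar>" R 2] by auto
    then have sx: "x'\<^sup>2 \<le> R\<^sup>2" "y'\<^sup>2 \<le> R\<^sup>2" by simp_all
    moreover have "h * x'\<^sup>2 \<le> x'\<^sup>2" using h by (simp add: mult_left_le_one_le)
    moreover have "0 \<le> h * x'\<^sup>2" using h by simp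
    moreover have "\<bar>h * x'\<^sup>2 - y'\<^sup>2\<bar> \<le> \<bar>h * x'\<^sup>2\<bar> + \<bar>y'\<^sup>2\<bar>" by (rule abs_triangle_ineq4)
    moreover have "\<bar>h * x'\<^sup>2\<bar> = h * x'\<^sup>2" "\<bar>y'\<^sup>2\<bar> = y'\<^sup>2" using h by simp_all
    ultimately show ?thesis by linarith
  qed
  have b1: "\<bar>(h * x\<^sup>2 - y\<^sup>2) - (h * x'\<^sup>2 - y'\<^sup>2)\<bar> / c \<le> (4 * R / c) * (\<bar>x - x'\<bar> + \<bar>y - y'\<bar>)"
  proof -
    have "\<bar>(h * x\<^sup>2 - y\<^sup>2) - (h * x'\<^sup>2 - y'\<^sup>2)\<bar> / c \<le> (2 * R * \<bar>x - x'\<bar> + 2 * R * \<bar>y - y'\<bar>) / c"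
      using a1 c by (simp add: divide_right_mono)
    also have "\<dots> \<le> (4 * R / c) * (\<bar>x - x'\<bar> + \<bar>y - y'\<bar>)" using c R0
      by (simp add: field_simps)
    finally show ?thesis .
  qed
  have b2: "\<bar>h * x'\<^sup>2 - y'\<^sup>2\<bar> * \<bar>z - z'\<bar> / c\<^sup>2 \<le> (2 * R\<^sup>2 / c\<^sup>2) * \<bar>z - z'\<bar>"
    using a2 c by (simp add: divide_right_mono mult_right_mono)
  have "\<bar>(- \<gamma> * x - (h * x\<^sup>2 - y\<^sup>2) / z) - (- \<gamma> * x' - (h * x'\<^sup>2 - y'\<^sup>2) / z')\<bar>
      \<le> \<gamma> * \<bar>x - x'\<bar> + \<bar>(h * x\<^sup>2 - y\<^sup>2) / z - (h * x'\<^sup>2 - y'\<^sup>2) / z'\<bar>"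
  proof -
    have "(- \<gamma> * x - (h * x\<^sup>2 - y\<^sup>2) / z) - (- \<gamma> * x' - (h * x'\<^sup>2 - y'\<^sup>2) / z')
        = - (\<gamma> * (x - x')) - ((h * x\<^sup>2 - y\<^sup>2) / z - (h * x'\<^sup>2 - y'\<^sup>2) / z')" (is "_ = ?R") by (simp add: algebra_simps)
    moreover have "\<bar>?R\<bar> \<le> \<gamma> * \<bar>x - x'\<bar> + \<bar>(h * x\<^sup>2 - y\<^sup>2) / z - (h * x'\<^sup>2 - y'\<^sup>2) / z'\<bar>"
      using abs_triangle_ineq4[of "- (\<gamma> * (x - x'))" "(h * x\<^sup>2 - y\<^sup>2) / z - (h * x'\<^sup>2 - y'\<^sup>2) / z'"] g by (simp add: abs_mult)
    ultimately show ?thesis by (simp only:)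
  qed
  also have "\<dots> \<le> \<gamma> * \<bar>x - x'\<bar> + (4 * R / c) * (\<bar>x - x'\<bar> + \<bar>y - y'\<bar>) + (2 * R\<^sup>2 / c\<^sup>2) * \<bar>z - z'\<bar>"
    using q b1 b2 by linarith
  also have "\<dots> \<le> (\<gamma> + 4 * R / c + 2 * R\<^sup>2 / c\<^sup>2) * (\<bar>x - x'\<bar> + \<bar>y - y'\<bar> + \<bar>z - z'\<bar>)"
  proof -
    have p1: "0 \<le> 4 * R / c" "0 \<le> 2 * R\<^sup>2 / c\<^sup>2" using R0 c by auto
    have "\<gamma> * \<bar>x - x'\<bar> \<le> \<gamma> * (\<bar>x - x'\<bar> + \<bar>y - y'\<bar> + \<bar>z - z'\<bar>)" using g by (intro mult_left_mono) auto
    moreover have "(4 * R / c) * (\<bar>x - x'\<bar> + \<bar>y - y'\<bar>) \<le> (4 * R / c) * (\<bar>x - x'\<bar> + \<bar>y - y'\<bar> + \<bar>z - z'\<bar>)"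
      using p1 by (intro mult_left_mono) auto
    moreover have "(2 * R\<^sup>2 / c\<^sup>2) * \<bar>z - z'\<bar> \<le> (2 * R\<^sup>2 / c\<^sup>2) * (\<bar>x - x'\<bar> + \<bar>y - y'\<bar> + \<bar>z - z'\<bar>)"
      using p1 by (intro mult_left_mono) auto
    ultimately show ?thesis by (simp add: distrib_right)
  qed
  finally show ?thesis .
qed

lemma drift2_lip:
  fixes \<gamma> h x y z x' y' z' R c :: real
  assumes g: "0 \<le> \<gamma>" and h: "0 \<le> h" "h \<le> 1" and c: "0 < c" and z: "c \<le> z" and z': "c \<le> z'"
    and R: "\<bar>x\<bar> \<le> R" "\<bar>x'\<bar> \<le> R" "\<bar>y\<bar> \<le> R" "\<bar>y'\<bar> \<le> R"
  shows "\<bar>(- \<gamma> * y - (1 + h) * (x * y) / z) - (- \<gamma> * y' - (1 + h) * (x' * y') / z')\<bar>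
     \<le> (\<gamma> + 4 * R / c + 2 * R\<^sup>2 / c\<^sup>2) * (\<bar>x - x'\<bar> + \<bar>y - y'\<bar> + \<bar>z - z'\<bar>)"
proof -
  have R0: "0 \<le> R" using R by auto
  have q: "\<bar>(1 + h) * (x * y) / z - (1 + h) * (x' * y') / z'\<bar>
     \<le> \<bar>(1 + h) * (x * y) - (1 + h) * (x' * y')\<bar> / c + \<bar>(1 + h) * (x' * y')\<bar> * \<bar>z - z'\<bar> / c\<^sup>2"
    by (rule quot_lip[OF c z z'])
  have a1: "\<bar>(1 + h) * (x * y) - (1 + h) * (x' * y')\<bar> \<le> 2 * R * (\<bar>x - x'\<bar> + \<bar>y - y'\<bar>)"
  proof -
    have "(1 + h) * (x * y) - (1 + h) * (x' * y') = (1 + h) * (x * y - x' * y')" by (simp add: algebra_simps)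
    then have "\<bar>(1 + h) * (x * y) - (1 + h) * (x' * y')\<bar> = (1 + h) * \<bar>x * y - x' * y'\<bar>"
      using h by (simp add: abs_mult)
    also have "\<dots> \<le> 2 * (R * (\<bar>x - x'\<bar> + \<bar>y - y'\<bar>))"
      using prod_lip[where x=x and x'=x' and y=y and y'=y' and R=R, OF R(1) R(4)] h by (intro mult_mono) auto
    finally show ?thesis by simp
  qed
  have a2: "\<bar>(1 + h) * (x' * y')\<bar> \<le> 2 * R\<^sup>2"
  proof -
    have p: "\<bar>x'\<bar> * \<bar>y'\<bar> \<le> R * R" using R R0 by (intro mult_mono) auto
    have p2: "(1 + h) * (\<bar>x'\<bar> * \<bar>y'\<bar>) \<le> 2 * (R * R)" using h p R0 by (rule_tac mult_mono) auto
    have "\<bar>(1 + h) * (x' * y')\<bar> = (1 + h) * (\<bar>x'\<bar> * \<bar>y'\<bar>)" using h by (simp add: abs_mult)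
    with p2 have "\<bar>(1 + h) * (x' * y')\<bar> \<le> 2 * (R * R)" by simp
    then show ?thesis by (simp add: power2_eq_square)
  qed
  have b1: "\<bar>(1 + h) * (x * y) - (1 + h) * (x' * y')\<bar> / c \<le> (4 * R / c) * (\<bar>x - x'\<bar> + \<bar>y - y'\<bar>)"
  proof -
    have "\<bar>(1 + h) * (x * y) - (1 + h) * (x' * y')\<bar> / c \<le> (2 * R * (\<bar>x - x'\<bar> + \<bar>y - y'\<bar>)) / c"
      using a1 c by (simp add: divide_right_mono)
    also have "\<dots> \<le> (4 * R / c) * (\<bar>x - x'\<bar> + \<bar>y - y'\<bar>)" using c R0
      by (simp add: field_simps)
    finally show ?thesis .
  qed
  have b2: "\<bar>(1 + h) * (x' * y')\<bar> * \<bar>z - z'\<bar> / c\<^sup>2 \<le> (2 * R\<^sup>2 / c\<^sup>2) * \<bar>z - z'\<bar>"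
    using a2 c by (simp add: divide_right_mono mult_right_mono)
  have "\<bar>(- \<gamma> * y - (1 + h) * (x * y) / z) - (- \<gamma> * y' - (1 + h) * (x' * y') / z')\<bar>
      \<le> \<gamma> * \<bar>y - y'\<bar> + \<bar>(1 + h) * (x * y) / z - (1 + h) * (x' * y') / z'\<bar>"
  proof -
    have "(- \<gamma> * y - (1 + h) * (x * y) / z) - (- \<gamma> * y' - (1 + h) * (x' * y') / z')
        = - (\<gamma> * (y - y')) - ((1 + h) * (x * y) / z - (1 + h) * (x' * y') / z')" (is "_ = ?R") by (simp add: algebra_simps)
    moreover have "\<bar>?R\<bar> \<le> \<gamma> * \<bar>y - y'\<bar> + \<bar>(1 + h) * (x * y) / z - (1 + h) * (x' * y') / z'\<bar>"
      using abs_triangle_ineq4[of "- (\<gamma> * (y - y'))" "(1 + h) * (x * y) / z - (1 + h) * (x' * y') / z'"] g by (simp add: abs_mult)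
    ultimately show ?thesis by (simp only:)
  qed
  also have "\<dots> \<le> \<gamma> * \<bar>y - y'\<bar> + (4 * R / c) * (\<bar>x - x'\<bar> + \<bar>y - y'\<bar>) + (2 * R\<^sup>2 / c\<^sup>2) * \<bar>z - z'\<bar>"
    using q b1 b2 by linarith
  also have "\<dots> \<le> (\<gamma> + 4 * R / c + 2 * R\<^sup>2 / c\<^sup>2) * (\<bar>x - x'\<bar> + \<bar>y - y'\<bar> + \<bar>z - z'\<bar>)"
  proof -
    have p1: "0 \<le> 4 * R / c" "0 \<le> 2 * R\<^sup>2 / c\<^sup>2" using R0 c by auto
    have "\<gamma> * \<bar>y - y'\<bar> \<le> \<gamma> * (\<bar>x - x'\<bar> + \<bar>y - y'\<bar> + \<bar>z - z'\<bar>)" using g by (intro mult_left_mono) auto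
    moreover have "(4 * R / c) * (\<bar>x - x'\<bar> + \<bar>y - y'\<bar>) \<le> (4 * R / c) * (\<bar>x - x'\<bar> + \<bar>y - y'\<bar> + \<bar>z - z'\<bar>)"
      using p1 by (intro mult_left_mono) auto
    moreover have "(2 * R\<^sup>2 / c\<^sup>2) * \<bar>z - z'\<bar> \<le> (2 * R\<^sup>2 / c\<^sup>2) * (\<bar>x - x'\<bar> + \<bar>y - y'\<bar> + \<bar>z - z'\<bar>)"
      using p1 by (intro mult_left_mono) auto
    ultimately show ?thesis by (simp add: distrib_right)
  qed
  finally show ?thesis .
qed

lemma rsD:
  assumes "reflected_solution \<gamma> h \<kappa>1 \<kappa>2 T V1 V2 x y z k"
  shows "continuous_on {0..T} x" "continuous_on {0..T} y" "continuous_on {0..T} z"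
    "\<And>t. t \<in> {0..T} \<Longrightarrow> 0 < z t" "\<And>t. t \<in> {0..T} \<Longrightarrow> z t \<le> 1"
    "reflection_term T z k"
    "\<And>t. t \<in> {0..T} \<Longrightarrow> x t = x 0 + integral {0..t} (\<lambda>s. - \<gamma> * x s - (h * (x s)\<^sup>2 - (y s)\<^sup>2) / z s)
                  + sqrt (2 * \<kappa>1) * (V1 t - V1 0)"
    "\<And>t. t \<in> {0..T} \<Longrightarrow> y t = y 0 + integral {0..t} (\<lambda>s. - \<gamma> * y s - (1 + h) * (x s * y s) / z s)
                  + sqrt (2 * \<kappa>2) * (V2 t - V2 0)"
    "\<And>t. t \<in> {0..T} \<Longrightarrow> z t = z 0 + integral {0..t} (\<lambda>s. (1 - h) * x s) - (k t - k 0)"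
proof -
  note A = assms[unfolded reflected_solution_def]
  show "continuous_on {0..T} x" "continuous_on {0..T} y" "continuous_on {0..T} z" "reflection_term T z k"
    using A by blast+
  have ss: "\<forall>t\<in>{0..T}. (x t, y t, z t) \<in> state_space" using A by blast
  show "\<And>t. t \<in> {0..T} \<Longrightarrow> 0 < z t" "\<And>t. t \<in> {0..T} \<Longrightarrow> z t \<le> 1"
    using ss by (auto simp: state_space_def)
  have E: "\<forall>t\<in>{0..T}.
        x t = x 0 + integral {0..t} (\<lambda>s. - \<gamma> * x s - (h * (x s)\<^sup>2 - (y s)\<^sup>2) / z s)
                  + sqrt (2 * \<kappa>1) * (V1 t - V1 0) \<and>
        y t = y 0 + integral {0..t} (\<lambda>s. - \<gamma> * y s - (1 + h) * (x s * y s) / z s)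
                  + sqrt (2 * \<kappa>2) * (V2 t - V2 0) \<and>
        z t = z 0 + integral {0..t} (\<lambda>s. (1 - h) * x s) - (k t - k 0)" using A by blast
  fix t assume t: "t \<in> {0..T}"
  from E t show "x t = x 0 + integral {0..t} (\<lambda>s. - \<gamma> * x s - (h * (x s)\<^sup>2 - (y s)\<^sup>2) / z s)
                  + sqrt (2 * \<kappa>1) * (V1 t - V1 0)" by blast
  from E t show "y t = y 0 + integral {0..t} (\<lambda>s. - \<gamma> * y s - (1 + h) * (x s * y s) / z s)
                  + sqrt (2 * \<kappa>2) * (V2 t - V2 0)" by blast
  from E t show "z t = z 0 + integral {0..t} (\<lambda>s. (1 - h) * x s) - (k t - k 0)" by blast
qed

lemma int_diff_bound:
  fixes f g e :: "real \<Rightarrow> real"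
  assumes "continuous_on {0..t} f" "continuous_on {0..t} g" "continuous_on {0..t} e"
    and b: "\<And>s. s \<in> {0..t} \<Longrightarrow> \<bar>f s - g s\<bar> \<le> L * e s"
  shows "\<bar>integral {0..t} f - integral {0..t} g\<bar> \<le> L * integral {0..t} e"
proof -
  have i: "f integrable_on {0..t}" "g integrable_on {0..t}" "e integrable_on {0..t}"
    using assms(1-3) by (auto intro: integrable_continuous_real)
  have i2: "(\<lambda>s. f s - g s) integrable_on {0..t}" "(\<lambda>s. L * e s) integrable_on {0..t}"
    using assms(1-3) by (auto intro!: integrable_continuous_real continuous_intros)
  have "integral {0..t} f - integral {0..t} g = integral {0..t} (\<lambda>s. f s - g s)"
    using i by (simp add: integral_diff)
  moreover have "\<bar>integral {0..t} (\<lambda>s. f s - g s)\<bar> \<le> integral {0..t} (\<lambda>s. L * e s)"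
    using Henstock_Kurzweil_Integration.integral_norm_bound_integral[OF i2] b
    by (auto simp: real_norm_def)
  moreover have "integral {0..t} (\<lambda>s. L * e s) = L * integral {0..t} e" by simp
  ultimately show ?thesis by simp
qed

lemma det_core:
  fixes x y z k xt yt zt kt V1 V2 U1 U2 :: "real \<Rightarrow> real"
  assumes g: "0 \<le> \<gamma>" and h: "0 \<le> h" "h \<le> 1" and T: "0 \<le> T" and kp: "0 \<le> \<kappa>1" "0 \<le> \<kappa>2"
    and ref: "reflected_solution \<gamma> h \<kappa>1 \<kappa>2 T U1 U2 xt yt zt kt"
    and rs: "reflected_solution \<gamma> h \<kappa>1 \<kappa>2 T V1 V2 x y z k"
    and c: "0 < c" and zc: "\<And>t. t \<in> {0..T} \<Longrightarrow> 2 * c \<le> zt t"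
    and Rx: "\<And>t. t \<in> {0..T} \<Longrightarrow> \<bar>xt t\<bar> + 1 \<le> R"
    and Ry: "\<And>t. t \<in> {0..T} \<Longrightarrow> \<bar>yt t\<bar> + 1 \<le> R"
    and \<rho>: "0 < \<rho>" "\<rho> \<le> c" "\<rho> \<le> 1"
    and L: "L = \<gamma> + 4 * R / c + 2 * R\<^sup>2 / c\<^sup>2"
    and A: "(\<bar>x 0 - xt 0\<bar> + \<bar>y 0 - yt 0\<bar> + 2 * \<bar>z 0 - zt 0\<bar> + (sqrt (2 * \<kappa>1) + sqrt (2 * \<kappa>2)) * \<delta>)
              * exp ((2 * L + 2) * T) < \<rho>"
    and Vc: "\<And>t. t \<in> {0..T} \<Longrightarrow> \<bar>(V1 t - V1 0) - (U1 t - U1 0)\<bar> \<le> \<delta> \<and> \<bar>(V2 t - V2 0) - (U2 t - U2 0)\<bar> \<le> \<delta>"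
  shows "\<forall>t\<in>{0..T}. \<bar>x t - xt t\<bar> + \<bar>y t - yt t\<bar> + \<bar>z t - zt t\<bar> < \<rho>"
proof -
  note Dd = rsD[OF ref] and Dr = rsD[OF rs]
  define s1 where "s1 = sqrt (2 * \<kappa>1)"
  define s2 where "s2 = sqrt (2 * \<kappa>2)"
  define e where "e t = \<bar>x t - xt t\<bar> + \<bar>y t - yt t\<bar> + \<bar>z t - zt t\<bar>" for t
  define A0 where "A0 = \<bar>x 0 - xt 0\<bar> + \<bar>y 0 - yt 0\<bar> + 2 * \<bar>z 0 - zt 0\<bar> + (s1 + s2) * \<delta>"
  define B where "B = 2 * L + 2"
  have R1: "1 \<le> R" using Rx[of 0] T by auto
  have L0: "0 \<le> L" unfolding L using g c R1 by auto
  have B0: "0 < B" unfolding B_def using L0 by simp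
  have \<delta>0: "0 \<le> \<delta>" using Vc[of 0] T by auto
  have s0: "0 \<le> s1" "0 \<le> s2" using kp by (auto simp: s1_def s2_def)
  have A00: "0 \<le> A0" unfolding A0_def using s0 \<delta>0 by auto
  have AE: "A0 * exp (B * T) < \<rho>" using A by (simp add: A0_def B_def s1_def s2_def)
  have e0: "\<And>t. 0 \<le> e t" by (simp add: e_def)
  have ce: "continuous_on {0..T} e" unfolding e_def
    by (intro continuous_intros Dd(1-3) Dr(1-3))
  have key: "e t \<le> A0 + B * integral {0..t} e"
    if t: "t \<in> {0..T}" and eb: "\<And>s. s \<in> {0..t} \<Longrightarrow> e s \<le> \<rho>" for t
  proof -
    have sT: "s \<in> {0..T}" if "s \<in> {0..t}" for s using that t by auto
    have bnd: "\<bar>x s\<bar> \<le> R \<and> \<bar>xt s\<bar> \<le> R \<and> \<bar>y s\<bar> \<le> R \<and> \<bar>yt s\<bar> \<le> R \<and> c \<le> z s \<and> c \<le> zt s"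
      if s: "s \<in> {0..t}" for s
    proof -
      have "e s \<le> \<rho>" by (rule eb[OF s])
      then have d: "\<bar>x s - xt s\<bar> \<le> 1" "\<bar>y s - yt s\<bar> \<le> 1" "\<bar>z s - zt s\<bar> \<le> c"
        using \<rho> unfolding e_def by auto
      show ?thesis using d Rx[OF sT[OF s]] Ry[OF sT[OF s]] zc[OF sT[OF s]] c by auto
    qed
    have ct: "continuous_on {0..t} f" if "continuous_on {0..T} f" for f :: "real \<Rightarrow> real"
      using continuous_on_subset[OF that, of "{0..t}"] t by auto
    have zr: "\<And>s. s \<in> {0..t} \<Longrightarrow> z s \<noteq> 0" using Dr(4) sT by force
    have zd: "\<And>s. s \<in> {0..t} \<Longrightarrow> zt s \<noteq> 0" using Dd(4) sT by force
    have cxr: "continuous_on {0..t} x" "continuous_on {0..t} y" "continuous_on {0..t} z"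
      using ct Dr(1-3) by blast+
    have cxd: "continuous_on {0..t} xt" "continuous_on {0..t} yt" "continuous_on {0..t} zt"
      using ct Dd(1-3) by blast+
    have cet: "continuous_on {0..t} e" using ct ce by blast
    have X: "\<bar>x t - xt t\<bar> \<le> \<bar>x 0 - xt 0\<bar> + L * integral {0..t} e + s1 * \<delta>"
    proof -
      let ?f = "\<lambda>s. - \<gamma> * x s - (h * (x s)\<^sup>2 - (y s)\<^sup>2) / z s"
      let ?g = "\<lambda>s. - \<gamma> * xt s - (h * (xt s)\<^sup>2 - (yt s)\<^sup>2) / zt s"
      have cf: "continuous_on {0..t} ?f" using cxr zr by (intro continuous_intros) auto
      have cg: "continuous_on {0..t} ?g" using cxd zd by (intro continuous_intros) auto
      have b: "\<bar>?f s - ?g s\<bar> \<le> L * e s" if s: "s \<in> {0..t}" for s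
        using drift1_lip[OF g h c, of "z s" "zt s" "x s" R "xt s" "y s" "yt s"] bnd[OF s]
        unfolding L e_def by auto
      have I: "\<bar>integral {0..t} ?f - integral {0..t} ?g\<bar> \<le> L * integral {0..t} e"
        by (rule int_diff_bound[OF cf cg cet b])
      have "x t - xt t = (x 0 - xt 0) + (integral {0..t} ?f - integral {0..t} ?g)
              + s1 * ((V1 t - V1 0) - (U1 t - U1 0))"
        using Dr(7)[OF t] Dd(7)[OF t] unfolding s1_def by (simp add: algebra_simps)
      moreover have "\<bar>s1 * ((V1 t - V1 0) - (U1 t - U1 0))\<bar> \<le> s1 * \<delta>"
        using Vc[OF t] s0 by (simp add: abs_mult mult_left_mono)
      ultimately show ?thesis using I by linarith
    qed
    have Y: "\<bar>y t - yt t\<bar> \<le> \<bar>y 0 - yt 0\<bar> + L * integral {0..t} e + s2 * \<delta>"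
    proof -
      let ?f = "\<lambda>s. - \<gamma> * y s - (1 + h) * (x s * y s) / z s"
      let ?g = "\<lambda>s. - \<gamma> * yt s - (1 + h) * (xt s * yt s) / zt s"
      have cf: "continuous_on {0..t} ?f" using cxr zr by (intro continuous_intros) auto
      have cg: "continuous_on {0..t} ?g" using cxd zd by (intro continuous_intros) auto
      have b: "\<bar>?f s - ?g s\<bar> \<le> L * e s" if s: "s \<in> {0..t}" for s
        using drift2_lip[OF g h c, of "z s" "zt s" "x s" R "xt s" "y s" "yt s"] bnd[OF s]
        unfolding L e_def by auto
      have I: "\<bar>integral {0..t} ?f - integral {0..t} ?g\<bar> \<le> L * integral {0..t} e"
        by (rule int_diff_bound[OF cf cg cet b])
      have "y t - yt t = (y 0 - yt 0) + (integral {0..t} ?f - integral {0..t} ?g)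
              + s2 * ((V2 t - V2 0) - (U2 t - U2 0))"
        using Dr(8)[OF t] Dd(8)[OF t] unfolding s2_def by (simp add: algebra_simps)
      moreover have "\<bar>s2 * ((V2 t - V2 0) - (U2 t - U2 0))\<bar> \<le> s2 * \<delta>"
        using Vc[OF t] s0 by (simp add: abs_mult mult_left_mono)
      ultimately show ?thesis using I by linarith
    qed
    have Z: "\<bar>z t - zt t\<bar> \<le> 2 * (\<bar>z 0 - zt 0\<bar> + integral {0..t} e)"
    proof -
      define w where "w s = z 0 + integral {0..s} (\<lambda>r. (1 - h) * x r)" for s
      define w' where "w' s = zt 0 + integral {0..s} (\<lambda>r. (1 - h) * xt r)" for s
      define m where "m = \<bar>z 0 - zt 0\<bar> + integral {0..t} e"
      have k0: "k 0 = 0" using Dr(6) unfolding reflection_term_def by blast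
      have kt0: "kt 0 = 0" using Dd(6) unfolding reflection_term_def by blast
      have zw: "z s = w s - k s" if "s \<in> {0..T}" for s using Dr(9)[OF that] k0 by (simp add: w_def)
      have zw': "zt s = w' s - kt s" if "s \<in> {0..T}" for s using Dd(9)[OF that] kt0 by (simp add: w'_def)
      have wm: "\<bar>w s - w' s\<bar> \<le> m" if s: "s \<in> {0..t}" for s
      proof -
        have ss: "{0..s} \<subseteq> {0..t}" using s by auto
        have cs: "continuous_on {0..s} f" if "continuous_on {0..t} f" for f :: "real \<Rightarrow> real"
          using that ss by (rule continuous_on_subset)
        have i1: "\<bar>integral {0..s} (\<lambda>r. (1 - h) * x r) - integral {0..s} (\<lambda>r. (1 - h) * xt r)\<bar>
            \<le> 1 * integral {0..s} e"
        proof (rule int_diff_bound)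
          show "continuous_on {0..s} (\<lambda>r. (1 - h) * x r)" using cs[OF cxr(1)] by (intro continuous_intros)
          show "continuous_on {0..s} (\<lambda>r. (1 - h) * xt r)" using cs[OF cxd(1)] by (intro continuous_intros)
          show "continuous_on {0..s} e" using cs[OF cet] .
          fix r assume r: "r \<in> {0..s}"
          have "\<bar>(1 - h) * x r - (1 - h) * xt r\<bar> = (1 - h) * \<bar>x r - xt r\<bar>"
            proof -
              have a: "\<bar>1 - h\<bar> = 1 - h" using h by simp
              have "(1 - h) * x r - (1 - h) * xt r = (1 - h) * (x r - xt r)" by (simp add: algebra_simps)
              then show ?thesis by (simp only: abs_mult a)
            qed
          also have "\<dots> \<le> 1 * \<bar>x r - xt r\<bar>" using h by (intro mult_right_mono) auto
          also have "\<dots> \<le> 1 * e r" by (simp add: e_def)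
          finally show "\<bar>(1 - h) * x r - (1 - h) * xt r\<bar> \<le> 1 * e r" .
        qed
        have i2: "integral {0..s} e \<le> integral {0..t} e"
          by (rule integral_subset_le[OF ss]) (use cs[OF cet] cet e0 in \<open>auto intro: integrable_continuous_real\<close>)
        show ?thesis unfolding w_def w'_def m_def using i1 i2 by linarith
      qed
      have k1: "k t - kt t \<le> m"
        by (rule skorokhod_half[OF Dr(6) Dd(6) zw zw' Dd(5) t wm])
      have wm': "\<bar>w' s - w s\<bar> \<le> m" if s: "s \<in> {0..t}" for s using wm[OF s] by linarith
      have k2: "kt t - k t \<le> m"
        by (rule skorokhod_half[OF Dd(6) Dr(6) zw' zw Dr(5) t wm'])
      have "z t - zt t = (w t - w' t) - (k t - kt t)" using zw[OF t] zw'[OF t] by simp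
      moreover have "\<bar>w t - w' t\<bar> \<le> m" using wm[of t] t by auto
      ultimately have "\<bar>z t - zt t\<bar> \<le> 2 * m" using k1 k2 by linarith
      then show ?thesis unfolding m_def .
    qed
    have "e t \<le> A0 + (2 * L + 2) * integral {0..t} e"
      using X Y Z unfolding e_def A0_def by (simp add: algebra_simps)
    then show ?thesis by (simp add: B_def)
  qed
  show ?thesis
  proof (rule ccontr)
    assume "\<not> ?thesis"
    then obtain t' where t': "t' \<in> {0..T}" "\<rho> \<le> e t'" unfolding e_def by force
    define Z where "Z = {0..T} \<inter> e -` {\<rho>..}"
    have clZ: "closed Z" unfolding Z_def by (rule continuous_closed_preimage[OF ce]) auto
    have Zne: "Z \<noteq> {}" using t' by (auto simp: Z_def)
    have bZ: "bdd_below Z" unfolding Z_def by (auto intro: bdd_belowI[of _ 0])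
    define t1 where "t1 = Inf Z"
    have t1Z: "t1 \<in> Z" unfolding t1_def by (rule closed_contains_Inf[OF Zne bZ clZ])
    have t1T: "t1 \<in> {0..T}" and et1: "\<rho> \<le> e t1" using t1Z by (auto simp: Z_def)
    have "exp 0 \<le> exp (B * T)" using B0 T by simp
    then have "A0 \<le> A0 * exp (B * T)" using A00 by (simp add: mult_le_cancel_left1)
    then have A\<rho>: "A0 < \<rho>" using AE by linarith
    have "e 0 \<le> A0" unfolding e_def A0_def using s0 \<delta>0 by auto
    then have "e 0 < \<rho>" using A\<rho> by linarith
    then have "t1 \<noteq> 0" using et1 by auto
    then have t1p: "0 < t1" using t1T by auto
    have lt: "e s < \<rho>" if s: "s \<in> {0..<t1}" for s
    proof (rule ccontr)
      assume "\<not> e s < \<rho>"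
      then have "s \<in> Z" using s t1T by (auto simp: Z_def)
      then have "t1 \<le> s" unfolding t1_def by (rule cInf_lower[OF _ bZ])
      with s show False by auto
    qed
    define Q where "Q = {0..t1} \<inter> e -` {..\<rho>}"
    have clQ: "closed Q" unfolding Q_def
      by (rule continuous_closed_preimage[OF continuous_on_subset[OF ce]]) (use t1T in auto)
    have "{0..<t1} \<subseteq> Q"
    proof
      fix s assume s: "s \<in> {0..<t1}"
      have "e s < \<rho>" by (rule lt[OF s])
      with s show "s \<in> Q" unfolding Q_def by auto
    qed
    then have "closure {0..<t1} \<subseteq> Q" using clQ by (rule closure_minimal)
    then have Q1: "{0..t1} \<subseteq> Q" using t1p by (simp add: closure_atLeastLessThan)
    have eb: "e s \<le> \<rho>" if "s \<in> {0..t1}" for s using Q1 that unfolding Q_def by auto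
    have "e t1 \<le> A0 * exp (B * t1)"
    proof (rule gronwall)
      show "0 \<le> t1" using t1p by simp
      show "continuous_on {0..t1} e" using continuous_on_subset[OF ce, of "{0..t1}"] t1T by auto
      show "0 < B" by (rule B0)
      show "t1 \<in> {0..t1}" using t1p by simp
      fix t assume t: "t \<in> {0..t1}"
      show "e t \<le> A0 + B * integral {0..t} e"
        by (rule key) (use t t1T eb in auto)
    qed
    also have "\<dots> \<le> A0 * exp (B * T)" using A00 B0 t1T by (intro mult_left_mono) auto
    finally show False using AE et1 by linarith
  qed
qed

lemma dist3_le:
  fixes a b c a' b' c' :: real
  shows "dist (a, b, c) (a', b', c') \<le> \<bar>a - a'\<bar> + \<bar>b - b'\<bar> + \<bar>c - c'\<bar>"
proof -
  have "dist (b, c) (b', c') \<le> \<bar>b - b'\<bar> + \<bar>c - c'\<bar>"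
    using sqrt_sum_squares_le_sum_abs[of "b - b'" "c - c'"] by (simp add: dist_Pair_Pair dist_real_def)
  moreover have "dist (a, b, c) (a', b', c') \<le> \<bar>a - a'\<bar> + \<bar>dist (b, c) (b', c')\<bar>"
    using sqrt_sum_squares_le_sum_abs[of "a - a'" "dist (b, c) (b', c')"] by (simp add: dist_Pair_Pair dist_real_def)
  ultimately show ?thesis by simp
qed

lemma dist3_ge:
  fixes a b c a' b' c' :: real
  shows "\<bar>a - a'\<bar> \<le> dist (a, b, c) (a', b', c')" "\<bar>b - b'\<bar> \<le> dist (a, b, c) (a', b', c')"
    "\<bar>c - c'\<bar> \<le> dist (a, b, c) (a', b', c')"
proof -
  show "\<bar>a - a'\<bar> \<le> dist (a, b, c) (a', b', c')"
    using dist_fst_le[of "(a, b, c)" "(a', b', c')"] by (simp add: dist_real_def)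
  have 1: "dist (b, c) (b', c') \<le> dist (a, b, c) (a', b', c')"
    using dist_snd_le[of "(a, b, c)" "(a', b', c')"] by simp
  show "\<bar>b - b'\<bar> \<le> dist (a, b, c) (a', b', c')"
    using dist_fst_le[of "(b, c)" "(b', c')"] 1 by (simp add: dist_real_def)
  show "\<bar>c - c'\<bar> \<le> dist (a, b, c) (a', b', c')"
    using dist_snd_le[of "(b, c)" "(b', c')"] 1 by (simp add: dist_real_def)
qed

lemma det_stability:
  fixes U1 U2 xt yt zt kt :: "real \<Rightarrow> real"
  assumes g: "0 < \<gamma>" and h: "0 < h" "h < 1" and kp: "0 < \<kappa>1" "0 < \<kappa>2" and T: "0 < T"
    and ref: "reflected_solution \<gamma> h \<kappa>1 \<kappa>2 T U1 U2 xt yt zt kt" and \<epsilon>: "0 < \<epsilon>"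
  shows "\<exists>\<epsilon>'>0. \<exists>\<delta>>0. \<forall>V1 V2 x y z k. reflected_solution \<gamma> h \<kappa>1 \<kappa>2 T V1 V2 x y z k \<longrightarrow>
     dist (xt 0, yt 0, zt 0) (x 0, y 0, z 0) < \<epsilon>' \<longrightarrow>
     (\<forall>t\<in>{0..T}. \<bar>(V1 t - V1 0) - (U1 t - U1 0)\<bar> \<le> \<delta> \<and> \<bar>(V2 t - V2 0) - (U2 t - U2 0)\<bar> \<le> \<delta>) \<longrightarrow>
     (\<forall>t\<in>{0..T}. dist (x t, y t, z t) (xt t, yt t, zt t) \<le> \<epsilon>)"
proof -
  note D = rsD[OF ref]
  obtain t0 where t0: "t0 \<in> {0..T}" "\<forall>t\<in>{0..T}. zt t0 \<le> zt t"
    using continuous_attains_inf[OF compact_Icc _ D(3)] T by auto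
  define c where "c = zt t0 / 2"
  have c: "0 < c" using D(4)[OF t0(1)] by (simp add: c_def)
  have zc: "\<And>t. t \<in> {0..T} \<Longrightarrow> 2 * c \<le> zt t" using t0 by (simp add: c_def)
  have cxy: "continuous_on {0..T} (\<lambda>t. \<bar>xt t\<bar> + \<bar>yt t\<bar>)" by (intro continuous_intros D(1,2))
  obtain t2 where t2: "t2 \<in> {0..T}" "\<forall>t\<in>{0..T}. \<bar>xt t\<bar> + \<bar>yt t\<bar> \<le> \<bar>xt t2\<bar> + \<bar>yt t2\<bar>"
    using continuous_attains_sup[OF compact_Icc _ cxy] T by auto
  define R where "R = \<bar>xt t2\<bar> + \<bar>yt t2\<bar> + 1"
  have Rx: "\<And>t. t \<in> {0..T} \<Longrightarrow> \<bar>xt t\<bar> + 1 \<le> R" and Ry: "\<And>t. t \<in> {0..T} \<Longrightarrow> \<bar>yt t\<bar> + 1 \<le> R"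
    using t2 unfolding R_def by (smt (verit))+
  define L where "L = \<gamma> + 4 * R / c + 2 * R\<^sup>2 / c\<^sup>2"
  define E where "E = exp ((2 * L + 2) * T)"
  define \<rho> where "\<rho> = min \<epsilon> (min c 1)"
  define s where "s = sqrt (2 * \<kappa>1) + sqrt (2 * \<kappa>2)"
  have E0: "0 < E" by (simp add: E_def)
  have \<rho>0: "0 < \<rho>" using \<epsilon> c by (simp add: \<rho>_def)
  have s0: "0 \<le> s" using kp by (simp add: s_def)
  define \<epsilon>' where "\<epsilon>' = \<rho> / (8 * E)"
  define \<delta> where "\<delta> = \<rho> / (4 * (s + 1) * E)"
  have \<epsilon>'0: "0 < \<epsilon>'" using \<rho>0 E0 by (simp add: \<epsilon>'_def)
  have \<delta>0: "0 < \<delta>" using \<rho>0 E0 s0 by (simp add: \<delta>_def)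
  show ?thesis
  proof (rule exI[of _ \<epsilon>'], rule conjI[OF \<epsilon>'0], rule exI[of _ \<delta>], rule conjI[OF \<delta>0], intro allI impI)
    fix V1 V2 x y z k
    assume rs: "reflected_solution \<gamma> h \<kappa>1 \<kappa>2 T V1 V2 x y z k"
      and d0: "dist (xt 0, yt 0, zt 0) (x 0, y 0, z 0) < \<epsilon>'"
      and Vc: "\<forall>t\<in>{0..T}. \<bar>(V1 t - V1 0) - (U1 t - U1 0)\<bar> \<le> \<delta> \<and> \<bar>(V2 t - V2 0) - (U2 t - U2 0)\<bar> \<le> \<delta>"
    have a1: "\<bar>x 0 - xt 0\<bar> + \<bar>y 0 - yt 0\<bar> + 2 * \<bar>z 0 - zt 0\<bar> \<le> 4 * dist (xt 0, yt 0, zt 0) (x 0, y 0, z 0)"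
      using dist3_ge[where a="xt 0" and b="yt 0" and c="zt 0" and a'="x 0" and b'="y 0" and c'="z 0"] by (simp add: abs_minus_commute)
    have a2: "4 * dist (xt 0, yt 0, zt 0) (x 0, y 0, z 0) * E < \<rho> / 2"
      using d0 E0 unfolding \<epsilon>'_def by (simp add: field_simps)
    have a3: "s * \<delta> * E \<le> \<rho> / 4"
    proof -
      have sp: "s + 1 > 0" using s0 by simp
      have "(s + 1) * \<delta> * E = \<rho> / 4" proof -
        have n1: "s + 1 \<noteq> 0" "E \<noteq> 0" using sp E0 by auto
        have "(s + 1) * \<delta> * E = \<rho> * ((s + 1) * E) / (4 * ((s + 1) * E))"
          unfolding \<delta>_def by (simp add: ac_simps)
        also have "\<dots> = \<rho> / 4" using n1 by simp
        finally show ?thesis .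
      qed
      moreover have "s * \<delta> * E \<le> (s + 1) * \<delta> * E" using \<delta>0 E0 by (intro mult_right_mono) auto
      ultimately show ?thesis by simp
    qed
    have A: "(\<bar>x 0 - xt 0\<bar> + \<bar>y 0 - yt 0\<bar> + 2 * \<bar>z 0 - zt 0\<bar> + (sqrt (2 * \<kappa>1) + sqrt (2 * \<kappa>2)) * \<delta>)
              * exp ((2 * L + 2) * T) < \<rho>"
    proof -
      have "(\<bar>x 0 - xt 0\<bar> + \<bar>y 0 - yt 0\<bar> + 2 * \<bar>z 0 - zt 0\<bar> + s * \<delta>) * E
          \<le> (4 * dist (xt 0, yt 0, zt 0) (x 0, y 0, z 0) + s * \<delta>) * E"
        using a1 E0 by (intro mult_right_mono) auto
      also have "\<dots> = 4 * dist (xt 0, yt 0, zt 0) (x 0, y 0, z 0) * E + s * \<delta> * E" by (simp add: algebra_simps)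
      also have "\<dots> < \<rho>" using a2 a3 \<rho>0 by linarith
      finally show ?thesis by (simp add: s_def E_def)
    qed
    have core: "\<forall>t\<in>{0..T}. \<bar>x t - xt t\<bar> + \<bar>y t - yt t\<bar> + \<bar>z t - zt t\<bar> < \<rho>"
      by (rule det_core[OF _ _ _ _ _ _ ref rs c zc Rx Ry \<rho>0 _ _ L_def A])
         (use g h T kp Vc in \<open>auto simp: \<rho>_def\<close>)
    show "\<forall>t\<in>{0..T}. dist (x t, y t, z t) (xt t, yt t, zt t) \<le> \<epsilon>"
    proof (intro ballI)
      fix t assume t: "t \<in> {0..T}"
      have "dist (x t, y t, z t) (xt t, yt t, zt t) \<le> \<bar>x t - xt t\<bar> + \<bar>y t - yt t\<bar> + \<bar>z t - zt t\<bar>"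
        by (rule dist3_le)
      also have "\<dots> < \<rho>" using core t by blast
      also have "\<dots> \<le> \<epsilon>" by (simp add: \<rho>_def)
      finally have "dist (x t, y t, z t) (xt t, yt t, zt t) < \<epsilon>" .
      then show "dist (x t, y t, z t) (xt t, yt t, zt t) \<le> \<epsilon>" by simp
    qed
  qed
qed

lemma gauss_low:
  fixes X :: "'a \<Rightarrow> real"
  assumes P: "prob_space M" and D: "distributed M lborel X (\<lambda>v. ennreal (normal_density 0 \<sigma> v))"
    and \<sigma>: "0 < \<sigma>" and r: "0 < r"
  shows "2 * r * normal_density 0 \<sigma> (\<bar>a\<bar> + r) \<le> measure M {\<omega>\<in>space M. \<bar>X \<omega> - a\<bar> \<le> r}"
proof -
  interpret prob_space M by (rule P)
  define A where "A = {a - r..a + r}"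
  have A: "A \<in> sets lborel" by (simp add: A_def)
  have eqA: "{\<omega>\<in>space M. \<bar>X \<omega> - a\<bar> \<le> r} = X -` A \<inter> space M" by (auto simp: A_def abs_le_iff)
  have mono: "normal_density 0 \<sigma> (\<bar>a\<bar> + r) \<le> normal_density 0 \<sigma> v" if v: "v \<in> A" for v
  proof -
    have "\<bar>v\<bar> \<le> \<bar>a\<bar> + r" using v by (auto simp: A_def)
    then have "v\<^sup>2 \<le> (\<bar>a\<bar> + r)\<^sup>2" using power_mono[of "\<bar>v\<bar>" "\<bar>a\<bar> + r" 2] by simp
    then have "- ((\<bar>a\<bar> + r) - 0)\<^sup>2 / (2 * \<sigma>\<^sup>2) \<le> - (v - 0)\<^sup>2 / (2 * \<sigma>\<^sup>2)"
      using \<sigma> by (simp add: divide_right_mono)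
    then show ?thesis unfolding normal_density_def using \<sigma>
      by (intro mult_left_mono) auto
  qed
  have "emeasure M (X -` A \<inter> space M) = (\<integral>\<^sup>+v. ennreal (normal_density 0 \<sigma> v) * indicator A v \<partial>lborel)"
    by (rule distributed_emeasure[OF D A])
  also have "\<dots> \<ge> (\<integral>\<^sup>+v. ennreal (normal_density 0 \<sigma> (\<bar>a\<bar> + r)) * indicator A v \<partial>lborel)"
    by (intro nn_integral_mono) (auto simp: indicator_def intro: mono)
  moreover have "(\<integral>\<^sup>+v. ennreal (normal_density 0 \<sigma> (\<bar>a\<bar> + r)) * indicator A v \<partial>lborel)
      = ennreal (normal_density 0 \<sigma> (\<bar>a\<bar> + r)) * ennreal (2 * r)"
    using A r by (simp add: nn_integral_cmult_indicator A_def)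
  ultimately have "ennreal (normal_density 0 \<sigma> (\<bar>a\<bar> + r) * (2 * r)) \<le> emeasure M (X -` A \<inter> space M)"
    using r by (simp add: ennreal_mult)
  then have "normal_density 0 \<sigma> (\<bar>a\<bar> + r) * (2 * r) \<le> measure M (X -` A \<inter> space M)"
    by (simp add: emeasure_eq_measure ennreal_le_iff)
  then show ?thesis unfolding eqA by (simp add: ac_simps)
qed

lemma gauss_tail:
  fixes X :: "'a \<Rightarrow> real"
  assumes P: "prob_space M" and D: "distributed M lborel X (\<lambda>v. ennreal (normal_density 0 \<sigma> v))"
    and \<sigma>: "0 < \<sigma>" and a: "0 < a"
  shows "measure M {\<omega>\<in>space M. a < \<bar>X \<omega>\<bar>} \<le> 3 * \<sigma> ^ 4 / a ^ 4"
proof -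
  interpret prob_space M by (rule P)
  define B where "B = {..< -a} \<union> {a<..}"
  have B: "B \<in> sets lborel" by (simp add: B_def)
  have eqB: "{\<omega>\<in>space M. a < \<bar>X \<omega>\<bar>} = X -` B \<inter> space M" by (auto simp: B_def)
  have ind: "indicator B v \<le> ennreal (v ^ 4 / a ^ 4)" for v :: real
  proof (cases "v \<in> B")
    case True
    then have "a \<le> \<bar>v\<bar>" by (auto simp: B_def)
    then have "a ^ 4 \<le> \<bar>v\<bar> ^ 4" using a by (intro power_mono) auto
    moreover have "\<bar>v\<bar> ^ 4 = v ^ 4" by (simp add: power_even_abs)
    ultimately have "a ^ 4 \<le> v ^ 4" by simp
    then have "1 \<le> v ^ 4 / a ^ 4" using a by (simp add: field_simps)
    then show ?thesis using True by (simp add: indicator_def)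
  next
    case False then show ?thesis by (simp add: indicator_def)
  qed
  have mom: "has_bochner_integral lborel (\<lambda>x. normal_density 0 \<sigma> x * (x - 0) ^ (2 * 2)) (fact (2 * 2) / ((2 / \<sigma>\<^sup>2) ^ 2 * fact 2))"
    using normal_moment_even[of \<sigma> 0 2] \<sigma> by simp
  have "fact (2 * 2) / ((2 / \<sigma>\<^sup>2) ^ 2 * fact 2) = (3 * \<sigma> ^ 4 :: real)"
    using \<sigma> by (simp add: fact_numeral field_simps power2_eq_square numeral_eq_Suc)
  with mom have mom': "has_bochner_integral lborel (\<lambda>x. normal_density 0 \<sigma> x * x ^ 4) (3 * \<sigma> ^ 4)" using \<sigma> by simp
  have nn: "(\<integral>\<^sup>+x. ennreal (normal_density 0 \<sigma> x * x ^ 4) \<partial>lborel) = ennreal (3 * \<sigma> ^ 4)"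
  proof -
    have "integrable lborel (\<lambda>x. normal_density 0 \<sigma> x * x ^ 4)" and "integral\<^sup>L lborel (\<lambda>x. normal_density 0 \<sigma> x * x ^ 4) = 3 * \<sigma> ^ 4"
      using mom' by (simp_all add: has_bochner_integral_iff)
    then show ?thesis using nn_integral_eq_integral[of lborel "\<lambda>x. normal_density 0 \<sigma> x * x ^ 4"]
      by (simp add: zero_le_even_power)
  qed
  have "emeasure M (X -` B \<inter> space M) = (\<integral>\<^sup>+v. ennreal (normal_density 0 \<sigma> v) * indicator B v \<partial>lborel)"
    by (rule distributed_emeasure[OF D B])
  also have "\<dots> \<le> (\<integral>\<^sup>+v. ennreal (normal_density 0 \<sigma> v) * ennreal (v ^ 4 / a ^ 4) \<partial>lborel)"
    by (intro nn_integral_mono mult_left_mono ind) auto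
  also have "\<dots> = (\<integral>\<^sup>+v. ennreal (1 / a ^ 4) * ennreal (normal_density 0 \<sigma> v * v ^ 4) \<partial>lborel)"
    by (intro nn_integral_cong) (auto simp: ennreal_mult[symmetric] zero_le_even_power)
  also have "\<dots> = ennreal (1 / a ^ 4) * ennreal (3 * \<sigma> ^ 4)"
    by (simp add: nn_integral_cmult nn)
  also have "\<dots> = ennreal (3 * \<sigma> ^ 4 / a ^ 4)"
    using a \<sigma> by (simp add: ennreal_mult[symmetric])
  finally have "measure M (X -` B \<inter> space M) \<le> 3 * \<sigma> ^ 4 / a ^ 4"
    using a \<sigma> by (simp add: emeasure_eq_measure ennreal_le_iff)
  then show ?thesis unfolding eqB .
qed

lemma chain_bound:
  fixes f :: "real \<Rightarrow> real" and a :: "nat \<Rightarrow> real"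
  assumes "\<And>l i. l \<le> m \<Longrightarrow> i < 2 ^ l \<Longrightarrow>
             \<bar>f (p + real (Suc i) * h / 2 ^ l) - f (p + real i * h / 2 ^ l)\<bar> \<le> a l"
    and "k \<le> 2 ^ m"
  shows "\<bar>f (p + real k * h / 2 ^ m) - f p\<bar> \<le> (\<Sum>l\<le>m. a l)"
  using assms
proof (induction m arbitrary: k)
  case 0
  have a0: "0 \<le> a 0" using order_trans[OF abs_ge_zero "0.prems"(1)[of 0 0]] by simp
  show ?case
  proof (cases "k = 0")
    case True then show ?thesis using a0 by simp
  next
    case False
    then have "k = 1" using "0.prems"(2) by simp
    then show ?thesis using "0.prems"(1)[of 0 0] by simp
  qed
next
  case (Suc m)
  have IH: "\<bar>f (p + real k' * h / 2 ^ m) - f p\<bar> \<le> (\<Sum>l\<le>m. a l)" if "k' \<le> 2 ^ m" for k'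
    using Suc.IH[OF _ that] Suc.prems(1) by simp
  have aS: "0 \<le> a (Suc m)" using order_trans[OF abs_ge_zero Suc.prems(1)[of "Suc m" 0]] by simp
  define k' where "k' = k div 2"
  have pw: "(2::real) ^ Suc m = 2 * 2 ^ m" by simp
  show ?case
  proof (cases "even k")
    case True
    then have kk: "k = 2 * k'" unfolding k'_def by simp
    have k'b: "k' \<le> 2 ^ m" using Suc.prems(2) kk by simp
    have pt: "p + real k * h / 2 ^ Suc m = p + real k' * h / 2 ^ m"
      unfolding kk pw by (simp add: field_simps)
    show ?thesis unfolding pt using IH[OF k'b] aS by simp
  next
    case False
    then have kk: "k = Suc (2 * k')" unfolding k'_def by presburger
    have k'b: "k' \<le> 2 ^ m" and k'l: "2 * k' < 2 ^ Suc m" using Suc.prems(2) kk by auto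
    have pt0: "p + real (2 * k') * h / 2 ^ Suc m = p + real k' * h / 2 ^ m"
      unfolding pw by (simp add: field_simps)
    have st: "\<bar>f (p + real k * h / 2 ^ Suc m) - f (p + real (2 * k') * h / 2 ^ Suc m)\<bar> \<le> a (Suc m)"
      using Suc.prems(1)[OF order.refl k'l] unfolding kk .
    have "\<bar>f (p + real k * h / 2 ^ Suc m) - f p\<bar>
       \<le> \<bar>f (p + real k * h / 2 ^ Suc m) - f (p + real (2 * k') * h / 2 ^ Suc m)\<bar>
         + \<bar>f (p + real k' * h / 2 ^ m) - f p\<bar>" unfolding pt0 by linarith
    also have "\<dots> \<le> a (Suc m) + (\<Sum>l\<le>m. a l)" using st IH[OF k'b] by linarith
    finally show ?thesis by simp
  qed
qed

lemma dyadic_dense: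
  fixes f :: "real \<Rightarrow> real"
  assumes h: "0 < h" and cf: "continuous_on {p..p + h} f"
    and B: "\<And>m k. k \<le> 2 ^ m \<Longrightarrow> f (p + real k * h / 2 ^ m) \<le> C"
    and s: "s \<in> {p..p + h}"
  shows "f s \<le> C"
proof -
  define k where "k m = nat \<lfloor>(s - p) * 2 ^ m / h\<rfloor>" for m :: nat
  define u where "u m = p + real (k m) * h / 2 ^ m" for m :: nat
  have fl: "real (k m) = of_int \<lfloor>(s - p) * 2 ^ m / h\<rfloor>" for m
    unfolding k_def using s h by (simp add: zero_le_floor zero_le_divide_iff)
  have kb: "k m \<le> 2 ^ m" for m
  proof -
    have "(s - p) / h \<le> 1" using s h by simp
    then have "((s - p) / h) * 2 ^ m \<le> 1 * 2 ^ m" by (intro mult_right_mono) auto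
    then have "(s - p) * 2 ^ m / h \<le> 2 ^ m" by simp
    then have "real (k m) \<le> 2 ^ m" unfolding fl by linarith
    then show ?thesis by (simp add: of_nat_le_iff[symmetric])
  qed
  have ub: "\<bar>u m - s\<bar> \<le> h / 2 ^ m" for m
  proof -
    define X where "X = (s - p) * 2 ^ m / h"
    define F where "F = real (k m)"
    have F1: "F \<le> X" "X < F + 1" unfolding F_def fl X_def by linarith+
    have XE: "X * h / 2 ^ m = s - p" unfolding X_def using h by simp
    have "F * h / 2 ^ m \<le> X * h / 2 ^ m" using F1 h by (intro divide_right_mono mult_right_mono) auto
    moreover have "X * h / 2 ^ m \<le> (F + 1) * h / 2 ^ m" using F1 h by (intro divide_right_mono mult_right_mono) auto
    moreover have "(F + 1) * h / 2 ^ m = F * h / 2 ^ m + h / 2 ^ m" by (simp add: field_simps)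
    ultimately show ?thesis unfolding u_def F_def[symmetric] XE by linarith
  qed
  have lim0: "(\<lambda>m. h / 2 ^ m) \<longlonglongrightarrow> 0"
    by (intro tendsto_divide_0[OF tendsto_const]) (simp add: filterlim_realpow_sequentially_gt1)
  have ulim: "u \<longlonglongrightarrow> s"
  proof -
    have "(\<lambda>m. u m - s) \<longlonglongrightarrow> 0"
      by (rule Lim_null_comparison[OF _ lim0]) (use ub in \<open>auto simp: real_norm_def\<close>)
    then show ?thesis by (simp add: LIM_zero_iff)
  qed
  have uin: "u m \<in> {p..p + h}" for m
  proof -
    have "0 \<le> real (k m) * h / 2 ^ m" using h by simp
    moreover have "real (k m) * h / 2 ^ m \<le> h"
    proof -
      have "real (k m) \<le> 2 ^ m" using kb[of m] by (simp add: of_nat_le_iff[symmetric])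
      then have "real (k m) * h \<le> 2 ^ m * h" using h by (intro mult_right_mono) auto
      then show ?thesis by (simp add: field_simps)
    qed
    ultimately show ?thesis unfolding u_def by auto
  qed
  have "(\<lambda>m. f (u m)) \<longlonglongrightarrow> f s"
    using continuous_on_tendsto_compose[OF cf ulim s] uin by (simp add: o_def)
  moreover have "\<forall>m. f (u m) \<le> C" using B kb unfolding u_def by blast
  ultimately show ?thesis by (intro LIMSEQ_le_const2) auto
qed

locale bm2 =
  fixes M :: "'a measure" and W1 W2 :: "real \<Rightarrow> 'a \<Rightarrow> real"
  assumes BM: "std_BM2 M W1 W2"
begin

lemma prob: "prob_space M" using BM unfolding std_BM2_def by blast

sublocale prob_space M by (rule prob)

definition WB :: "bool \<Rightarrow> real \<Rightarrow> 'a \<Rightarrow> real" where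
  "WB b t = (if b then W1 else W2) (max 0 t)"

lemma WB_eq: "0 \<le> t \<Longrightarrow> WB b t = (if b then W1 else W2) t"
  by (simp add: WB_def)

lemma WB_meas[measurable]: "WB b t \<in> borel_measurable M"
proof -
  have "\<forall>t\<ge>0. W1 t \<in> borel_measurable M \<and> W2 t \<in> borel_measurable M" using BM unfolding std_BM2_def by blast
  then show ?thesis unfolding WB_def by simp
qed

lemma WB_0: "\<omega> \<in> space M \<Longrightarrow> WB b 0 \<omega> = 0"
  using BM unfolding std_BM2_def WB_def by auto

lemma WB_cont: assumes "\<omega> \<in> space M" shows "continuous_on S (\<lambda>t. WB b t \<omega>)"
proof -
  have c: "continuous_on {0..} (\<lambda>t. (if b then W1 else W2) t \<omega>)"
    using BM assms unfolding std_BM2_def by (cases b) auto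
  have "continuous_on UNIV (\<lambda>t. (if b then W1 else W2) (max 0 t) \<omega>)"
    by (rule continuous_on_compose2[OF c, of UNIV "\<lambda>t. max 0 t"]) (auto intro!: continuous_intros)
  then show ?thesis unfolding WB_def by (rule continuous_on_subset) auto
qed

lemma WB_incr:
  assumes "0 \<le> s" "s < t"
  shows "distributed M lborel (\<lambda>\<omega>. WB b t \<omega> - WB b s \<omega>) (\<lambda>v. ennreal (normal_density 0 (sqrt (t - s)) v))"
proof -
  define \<tau> :: "nat \<Rightarrow> real" where "\<tau> i = (if i = 0 then s else t)" for i
  have "0 \<le> \<tau> 0 \<and> (\<forall>i<1. \<tau> i < \<tau> (Suc i))" using assms by (simp add: \<tau>_def)
  then have "\<forall>i<1. distributed M lborel (\<lambda>\<omega>. W1 (\<tau> (Suc i)) \<omega> - W1 (\<tau> i) \<omega>)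
                   (\<lambda>v. ennreal (normal_density 0 (sqrt (\<tau> (Suc i) - \<tau> i)) v)) \<and>
               distributed M lborel (\<lambda>\<omega>. W2 (\<tau> (Suc i)) \<omega> - W2 (\<tau> i) \<omega>)
                   (\<lambda>v. ennreal (normal_density 0 (sqrt (\<tau> (Suc i) - \<tau> i)) v))"
    using BM unfolding std_BM2_def by blast
  then have "distributed M lborel (\<lambda>\<omega>. W1 t \<omega> - W1 s \<omega>) (\<lambda>v. ennreal (normal_density 0 (sqrt (t - s)) v)) \<and>
     distributed M lborel (\<lambda>\<omega>. W2 t \<omega> - W2 s \<omega>) (\<lambda>v. ennreal (normal_density 0 (sqrt (t - s)) v))"
    by (simp add: \<tau>_def)
  moreover have "WB b t = (if b then W1 else W2) t" "WB b s = (if b then W1 else W2) s"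
    using assms by (simp_all add: WB_eq)
  ultimately show ?thesis by (cases b) auto
qed

lemma WB_indep:
  assumes "0 \<le> \<tau> 0" "\<forall>i<n. \<tau> i < \<tau> (Suc i)"
  shows "indep_vars (\<lambda>_. borel) (\<lambda>(b, i) \<omega>. WB b (\<tau> (Suc i)) \<omega> - WB b (\<tau> i) \<omega>) (UNIV \<times> {..<n})"
proof -
  have nn: "0 \<le> \<tau> i" if "i \<le> n" for i
    using that
  proof (induction i)
    case 0 then show ?case using assms by simp
  next
    case (Suc i) then show ?case using assms(2) by (metis Suc_le_lessD less_imp_le order_trans order_less_imp_le)
  qed
  have I: "indep_vars (\<lambda>_. borel)
          (\<lambda>(b, i) \<omega>. (if b then W1 else W2) (\<tau> (Suc i)) \<omega> - (if b then W1 else W2) (\<tau> i) \<omega>)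
          (UNIV \<times> {..<n})"
    using BM assms unfolding std_BM2_def by blast
  show ?thesis
  proof (rule iffD1[OF indep_vars_cong I])
    fix bi :: "bool \<times> nat" assume bi: "bi \<in> UNIV \<times> {..<n}"
    then obtain b i where bi': "bi = (b, i)" "i < n" by auto
    have "0 \<le> \<tau> i" "0 \<le> \<tau> (Suc i)" using nn bi' by auto
    then show "(case bi of (b, i) \<Rightarrow> \<lambda>\<omega>. (if b then W1 else W2) (\<tau> (Suc i)) \<omega> - (if b then W1 else W2) (\<tau> i) \<omega>) =
          (case bi of (b, i) \<Rightarrow> \<lambda>\<omega>. WB b (\<tau> (Suc i)) \<omega> - WB b (\<tau> i) \<omega>)"
      unfolding bi' by (simp add: WB_eq)
  qed auto
qed

end

context bm2
begin

definition evA :: "bool \<Rightarrow> (real \<Rightarrow> real) \<Rightarrow> real \<Rightarrow> real \<Rightarrow> nat \<Rightarrow> 'a set" where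
  "evA b u \<tau> r j = {\<omega>\<in>space M. \<bar>WB b (real (Suc j) * \<tau>) \<omega> - WB b (real j * \<tau>) \<omega>
       - (u (real (Suc j) * \<tau>) - u (real j * \<tau>))\<bar> \<le> r}"

definition evB :: "bool \<Rightarrow> (nat \<Rightarrow> real) \<Rightarrow> real \<Rightarrow> nat \<Rightarrow> nat \<Rightarrow> 'a set" where
  "evB b a \<tau> j m = {\<omega>\<in>space M. \<forall>l\<in>{..m}. \<forall>i\<in>{..<2^l}.
      \<bar>WB b (real j * \<tau> + real (Suc i) * \<tau> / 2 ^ l) \<omega> - WB b (real j * \<tau> + real i * \<tau> / 2 ^ l) \<omega>\<bar> \<le> a l}"

lemma evA_sets[measurable]: "evA b u \<tau> r j \<in> sets M"
  unfolding evA_def by measurable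

lemma evB_sets[measurable]: "evB b a \<tau> j m \<in> sets M"
  unfolding evB_def by measurable

lemma evA_prob:
  assumes \<tau>: "0 < \<tau>" and r: "0 < r"
  shows "2 * r * normal_density 0 (sqrt \<tau>) (\<bar>u (real (Suc j) * \<tau>) - u (real j * \<tau>)\<bar> + r) \<le> prob (evA b u \<tau> r j)"
proof -
  have d: "real (Suc j) * \<tau> - real j * \<tau> = \<tau>" by (simp add: algebra_simps)
  have D: "distributed M lborel (\<lambda>\<omega>. WB b (real (Suc j) * \<tau>) \<omega> - WB b (real j * \<tau>) \<omega>)
      (\<lambda>v. ennreal (normal_density 0 (sqrt \<tau>) v))"
    using WB_incr[of "real j * \<tau>" "real (Suc j) * \<tau>" b] \<tau> unfolding d by (simp add: algebra_simps)
  show ?thesis unfolding evA_def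
    by (rule gauss_low[OF prob D]) (use \<tau> r in auto)
qed

lemma evB_prob:
  assumes \<tau>: "0 < \<tau>" and a: "\<And>l. 0 < a l"
  shows "prob (space M - evB b a \<tau> j m) \<le> (\<Sum>l\<le>m. 2 ^ l * (3 * (\<tau> / 2 ^ l)\<^sup>2 / (a l) ^ 4))"
proof -
  define I where "I = Sigma {..m} (\<lambda>l. {..<(2::nat)^l})"
  define s where "s l i = real j * \<tau> + real i * \<tau> / 2 ^ l" for l i :: nat
  define s' where "s' l i = real j * \<tau> + real (Suc i) * \<tau> / 2 ^ l" for l i :: nat
  define F where "F li = {\<omega>\<in>space M. a (fst li) < \<bar>WB b (s' (fst li) (snd li)) \<omega> - WB b (s (fst li) (snd li)) \<omega>\<bar>}" for li
  have fin: "finite I" unfolding I_def by auto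
  have Fs: "F ` I \<subseteq> events" unfolding F_def by auto
  have eq: "space M - evB b a \<tau> j m = (\<Union>li\<in>I. F li)"
    unfolding evB_def F_def I_def s_def s'_def by (auto simp: not_le) (metis atMost_iff lessThan_iff not_le)
  have each: "prob (F li) \<le> 3 * (\<tau> / 2 ^ fst li)\<^sup>2 / (a (fst li)) ^ 4" for li
  proof -
    obtain l i where li: "li = (l, i)" by (cases li)
    have st: "s' l i - s l i = \<tau> / 2 ^ l" unfolding s_def s'_def by (simp add: field_simps)
    have pos: "0 < \<tau> / 2 ^ l" using \<tau> by simp
    have j0: "0 \<le> s l i" unfolding s_def using \<tau> by simp
    have D: "distributed M lborel (\<lambda>\<omega>. WB b (s' l i) \<omega> - WB b (s l i) \<omega>)
        (\<lambda>v. ennreal (normal_density 0 (sqrt (\<tau> / 2 ^ l)) v))"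
      using WB_incr[of "s l i" "s' l i" b] j0 st pos by simp
    have "prob {\<omega>\<in>space M. a l < \<bar>WB b (s' l i) \<omega> - WB b (s l i) \<omega>\<bar>} \<le> 3 * sqrt (\<tau> / 2 ^ l) ^ 4 / a l ^ 4"
      by (rule gauss_tail[OF prob D]) (use pos a in auto)
    moreover have "sqrt (\<tau> / 2 ^ l) ^ 4 = (\<tau> / 2 ^ l)\<^sup>2"
    proof -
      have "sqrt (\<tau> / 2 ^ l) ^ 4 = (sqrt (\<tau> / 2 ^ l) ^ 2) ^ 2" by (simp flip: power_mult)
      also have "\<dots> = (\<tau> / 2 ^ l)\<^sup>2" using pos by simp
      finally show ?thesis .
    qed
    ultimately show ?thesis unfolding F_def li by simp
  qed
  have "prob (space M - evB b a \<tau> j m) \<le> (\<Sum>li\<in>I. prob (F li))"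
    unfolding eq by (rule finite_measure_subadditive_finite[OF fin Fs])
  also have "\<dots> \<le> (\<Sum>li\<in>I. 3 * (\<tau> / 2 ^ fst li)\<^sup>2 / (a (fst li)) ^ 4)"
    by (intro sum_mono each)
  also have "\<dots> = (\<Sum>l\<le>m. \<Sum>i<(2::nat)^l. 3 * (\<tau> / 2 ^ l)\<^sup>2 / (a l) ^ 4)"
  proof -
    have "(\<Sum>li\<in>I. 3 * (\<tau> / 2 ^ fst li)\<^sup>2 / (a (fst li)) ^ 4) = (\<Sum>(l, i)\<in>I. 3 * (\<tau> / 2 ^ l)\<^sup>2 / (a l) ^ 4)"
      by (simp add: split_beta)
    also have "\<dots> = (\<Sum>l\<le>m. \<Sum>i<(2::nat)^l. 3 * (\<tau> / 2 ^ l)\<^sup>2 / (a l) ^ 4)"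
      unfolding I_def by (rule sum.Sigma[symmetric]) auto
    finally show ?thesis .
  qed
  also have "\<dots> = (\<Sum>l\<le>m. 2 ^ l * (3 * (\<tau> / 2 ^ l)\<^sup>2 / (a l) ^ 4))"
    by simp
  finally show ?thesis .
qed

end

lemma sets_abs_le:
  fixes f :: "'b \<Rightarrow> real"
  assumes [measurable]: "f \<in> borel_measurable N"
  shows "{x\<in>space N. \<bar>f x - c\<bar> \<le> r} \<in> sets N"
proof -
  have m: "(\<lambda>x. \<bar>f x - c\<bar>) \<in> borel_measurable N" by measurable
  have "{x\<in>space N. \<bar>f x - c\<bar> \<le> r} = (\<lambda>x. \<bar>f x - c\<bar>) -` {..r} \<inter> space N" by auto
  also have "\<dots> \<in> sets N" by (rule measurable_sets[OF m]) simp
  finally show ?thesis .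
qed

lemma tk_id:
  fixes \<tau> :: real
  assumes "l \<le> m"
  shows "real (j * 2 ^ m + i * 2 ^ (m - l)) * (\<tau> / 2 ^ m) = real j * \<tau> + real i * \<tau> / 2 ^ l"
proof -
  have p: "(2::real) ^ m = 2 ^ (m - l) * 2 ^ l" using assms by (simp add: power_add[symmetric])
  show ?thesis by (simp add: p field_simps)
qed

lemma block_disj:
  fixes m :: nat and S :: "('b \<times> nat) set"
  shows "disjoint_family_on (\<lambda>g. {fst g} \<times> {snd g * 2 ^ m..<Suc (snd g) * 2 ^ m}) S"
  unfolding disjoint_family_on_def
proof (intro ballI impI)
  fix g g' :: "'b \<times> nat" assume "g \<noteq> g'"
  show "{fst g} \<times> {snd g * 2 ^ m..<Suc (snd g) * 2 ^ m} \<inter> {fst g'} \<times> {snd g' * 2 ^ m..<Suc (snd g') * 2 ^ m} = {}"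
  proof (rule ccontr)
    assume "\<not> ?thesis"
    then obtain k where k: "fst g = fst g'" "snd g * 2 ^ m \<le> k" "k < Suc (snd g) * 2 ^ m"
      "snd g' * 2 ^ m \<le> k" "k < Suc (snd g') * 2 ^ m" by auto
    have "k div 2 ^ m = snd g" using k(2,3) by (intro div_nat_eqI) (auto simp: ac_simps)
    moreover have "k div 2 ^ m = snd g'" using k(4,5) by (intro div_nat_eqI) (auto simp: ac_simps)
    ultimately have "g = g'" using k(1) by (simp add: prod_eq_iff)
    with \<open>g \<noteq> g'\<close> show False by simp
  qed
qed

context bm2
begin

lemma indep_blocks:
  assumes \<tau>: "0 < \<tau>" and N: "0 < N"
  shows "prob (\<Inter>g\<in>UNIV \<times> {..<N}. evA (fst g) (u (fst g)) \<tau> r (snd g) \<inter> evB (fst g) a \<tau> (snd g) m)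
       = (\<Prod>g\<in>UNIV \<times> {..<N}. prob (evA (fst g) (u (fst g)) \<tau> r (snd g) \<inter> evB (fst g) a \<tau> (snd g) m))"
proof -
  define D where "D = \<tau> / 2 ^ m"
  define tk where "tk k = real k * D" for k :: nat
  define n where "n = N * 2 ^ m"
  define X where "X = (\<lambda>(b, k) \<omega>. WB b (tk (Suc k)) \<omega> - WB b (tk k) \<omega>)"
  define J where "J = (UNIV :: bool set) \<times> {..<N}"
  define K where "K g = {fst g} \<times> {snd g * 2 ^ m..<Suc (snd g) * 2 ^ m}" for g :: "bool \<times> nat"
  have D0: "0 < D" using \<tau> by (simp add: D_def)
  have IX: "indep_vars (\<lambda>_. borel) X (UNIV \<times> {..<n})"
    unfolding X_def by (rule WB_indep) (use D0 in \<open>auto simp: tk_def\<close>)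
  have Kin: "K g \<subseteq> UNIV \<times> {..<n}" if "g \<in> J" for g
  proof
    fix x assume "x \<in> K g"
    then obtain k where x: "x = (fst g, k)" "k < Suc (snd g) * 2 ^ m" by (auto simp: K_def)
    have "Suc (snd g) * 2 ^ m \<le> N * 2 ^ m" using that by (intro mult_right_mono) (auto simp: J_def)
    with x show "x \<in> UNIV \<times> {..<n}" by (auto simp: n_def)
  qed
  have disj: "disjoint_family_on K J" unfolding K_def by (rule block_disj)
  define Y where "Y g \<omega> = restrict (\<lambda>i. X i \<omega>) (K g)" for g \<omega>
  have IY: "indep_vars (\<lambda>g. PiM (K g) (\<lambda>_. borel)) Y J"
    unfolding Y_def by (rule indep_vars_restrict[OF IX Kin disj])
  define \<Phi> where "\<Phi> g f = (\<bar>(\<Sum>k\<in>{snd g * 2 ^ m..<Suc (snd g) * 2 ^ m}. f (fst g, k))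
        - (u (fst g) (real (Suc (snd g)) * \<tau>) - u (fst g) (real (snd g) * \<tau>))\<bar> \<le> r \<and>
      (\<forall>l\<in>{..m}. \<forall>i\<in>{..<2^l}. \<bar>\<Sum>k\<in>{snd g * 2 ^ m + i * 2 ^ (m - l)..<snd g * 2 ^ m + Suc i * 2 ^ (m - l)}. f (fst g, k)\<bar> \<le> a l))"
    for g :: "bool \<times> nat" and f :: "bool \<times> nat \<Rightarrow> real"
  define S where "S g = {f\<in>space (PiM (K g) (\<lambda>_. borel)). \<Phi> g f}" for g
  have rng: "snd g * 2 ^ m + Suc i * 2 ^ (m - l) \<le> Suc (snd g) * 2 ^ m" if "l \<le> m" "i < 2 ^ l" for g and i l :: nat
  proof -
    have "Suc i * 2 ^ (m - l) \<le> 2 ^ l * 2 ^ (m - l)" using that by (intro mult_right_mono) auto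
    also have "\<dots> = 2 ^ m" using that by (simp add: power_add[symmetric])
    finally show ?thesis by simp
  qed
  have Ssets: "S g \<in> sets (PiM (K g) (\<lambda>_. borel))" for g
  proof -
    let ?N = "PiM (K g) (\<lambda>_. borel) :: (bool \<times> nat \<Rightarrow> real) measure"
    have msum: "(\<lambda>f. \<Sum>k\<in>R. f (fst g, k)) \<in> borel_measurable ?N"
      if R: "R \<subseteq> {snd g * 2 ^ m..<Suc (snd g) * 2 ^ m}" for R
    proof (rule borel_measurable_sum)
      fix k assume "k \<in> R"
      then have "(fst g, k) \<in> K g" using R by (auto simp: K_def)
      then show "(\<lambda>f. f (fst g, k)) \<in> borel_measurable ?N"
        using measurable_component_singleton[of "(fst g, k)" "K g" "\<lambda>_. borel"] by simp
    qed
    have s1: "{f\<in>space ?N. \<bar>(\<Sum>k\<in>{snd g * 2 ^ m..<Suc (snd g) * 2 ^ m}. f (fst g, k))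
        - (u (fst g) (real (Suc (snd g)) * \<tau>) - u (fst g) (real (snd g) * \<tau>))\<bar> \<le> r} \<in> sets ?N"
      by (rule sets_abs_le[OF msum]) simp
    have s2: "{f\<in>space ?N. \<forall>l\<in>{..m}. \<forall>i\<in>{..<2^l}. \<bar>\<Sum>k\<in>{snd g * 2 ^ m + i * 2 ^ (m - l)..<snd g * 2 ^ m + Suc i * 2 ^ (m - l)}. f (fst g, k)\<bar> \<le> a l} \<in> sets ?N"
    proof (intro sets.sets_Collect_finite_All)
      fix l i :: nat assume l: "l \<in> {..m}" and i: "i \<in> {..<2^l}"
      have "{snd g * 2 ^ m + i * 2 ^ (m - l)..<snd g * 2 ^ m + Suc i * 2 ^ (m - l)} \<subseteq> {snd g * 2 ^ m..<Suc (snd g) * 2 ^ m}"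
        using rng[of l i g] l i by auto
      from sets_abs_le[OF msum[OF this], of 0 "a l"]
      show "{f\<in>space ?N. \<bar>\<Sum>k\<in>{snd g * 2 ^ m + i * 2 ^ (m - l)..<snd g * 2 ^ m + Suc i * 2 ^ (m - l)}. f (fst g, k)\<bar> \<le> a l} \<in> sets ?N"
        by simp
    qed auto
    have "S g = {f\<in>space ?N. \<bar>(\<Sum>k\<in>{snd g * 2 ^ m..<Suc (snd g) * 2 ^ m}. f (fst g, k))
        - (u (fst g) (real (Suc (snd g)) * \<tau>) - u (fst g) (real (snd g) * \<tau>))\<bar> \<le> r} \<inter>
       {f\<in>space ?N. \<forall>l\<in>{..m}. \<forall>i\<in>{..<2^l}. \<bar>\<Sum>k\<in>{snd g * 2 ^ m + i * 2 ^ (m - l)..<snd g * 2 ^ m + Suc i * 2 ^ (m - l)}. f (fst g, k)\<bar> \<le> a l}"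
      unfolding S_def \<Phi>_def by auto
    then show ?thesis using s1 s2 by simp
  qed
  have tel: "(\<Sum>k\<in>{p..<q}. Y g \<omega> (fst g, k)) = WB (fst g) (tk q) \<omega> - WB (fst g) (tk p) \<omega>"
    if "snd g * 2 ^ m \<le> p" "p \<le> q" "q \<le> Suc (snd g) * 2 ^ m" for g p q \<omega>
  proof -
    have "(\<Sum>k\<in>{p..<q}. Y g \<omega> (fst g, k)) = (\<Sum>k\<in>{p..<q}. WB (fst g) (tk (Suc k)) \<omega> - WB (fst g) (tk k) \<omega>)"
      using that by (intro sum.cong) (auto simp: Y_def K_def X_def)
    also have "\<dots> = WB (fst g) (tk q) \<omega> - WB (fst g) (tk p) \<omega>"
      by (rule sum_Suc_diff'[OF that(2), of "\<lambda>k. WB (fst g) (tk k) \<omega>"])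
    finally show ?thesis .
  qed
  have t0: "tk (j * 2 ^ m) = real j * \<tau>" for j
    using tk_id[of 0 m j 0 \<tau>] by (simp add: tk_def D_def)
  have t1: "tk (Suc j * 2 ^ m) = real (Suc j) * \<tau>" for j
    using tk_id[of 0 m j 1 \<tau>] by (simp add: tk_def D_def algebra_simps)
  have t2: "tk (j * 2 ^ m + i * 2 ^ (m - l)) = real j * \<tau> + real i * \<tau> / 2 ^ l" if "l \<le> m" for j i l
    using tk_id[OF that, of j i \<tau>] by (simp add: tk_def D_def)
  have eq: "Y g -` S g \<inter> space M = evA (fst g) (u (fst g)) \<tau> r (snd g) \<inter> evB (fst g) a \<tau> (snd g) m"
    if "g \<in> J" for g
  proof -
    obtain b j where g: "g = (b, j)" by (cases g)
    have Ysp: "Y g \<omega> \<in> space (PiM (K g) (\<lambda>_. borel))" for \<omega> by (simp add: Y_def space_PiM)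
    have c1: "(\<Sum>k\<in>{j * 2 ^ m..<Suc j * 2 ^ m}. Y g \<omega> (b, k)) = WB b (real (Suc j) * \<tau>) \<omega> - WB b (real j * \<tau>) \<omega>" for \<omega>
      using tel[of g "j * 2 ^ m" "Suc j * 2 ^ m" \<omega>] t0 t1 by (simp add: g)
    have c2: "(\<Sum>k\<in>{j * 2 ^ m + i * 2 ^ (m - l)..<j * 2 ^ m + Suc i * 2 ^ (m - l)}. Y g \<omega> (b, k))
        = WB b (real j * \<tau> + real (Suc i) * \<tau> / 2 ^ l) \<omega> - WB b (real j * \<tau> + real i * \<tau> / 2 ^ l) \<omega>"
      if "l \<le> m" "i < 2 ^ l" for \<omega> l i
    proof -
      have "j * 2 ^ m + Suc i * 2 ^ (m - l) \<le> Suc j * 2 ^ m" using rng[OF that, of g] by (simp add: g)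
      then show ?thesis
        using tel[of g "j * 2 ^ m + i * 2 ^ (m - l)" "j * 2 ^ m + Suc i * 2 ^ (m - l)" \<omega>] t2[OF that(1), of j i] t2[OF that(1), of j "Suc i"]
        by (simp add: g)
    qed
    show ?thesis
      unfolding S_def \<Phi>_def evA_def evB_def using Ysp c1 c2 by (auto simp: g)
  qed
  have "prob (\<Inter>g\<in>J. Y g -` S g \<inter> space M) = (\<Prod>g\<in>J. prob (Y g -` S g \<inter> space M))"
    by (rule indep_varsD[OF IY]) (use N Ssets in \<open>auto simp: J_def\<close>)
  moreover have "(\<Inter>g\<in>J. Y g -` S g \<inter> space M) = (\<Inter>g\<in>J. evA (fst g) (u (fst g)) \<tau> r (snd g) \<inter> evB (fst g) a \<tau> (snd g) m)"
    using eq by auto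
  moreover have "(\<Prod>g\<in>J. prob (Y g -` S g \<inter> space M)) = (\<Prod>g\<in>J. prob (evA (fst g) (u (fst g)) \<tau> r (snd g) \<inter> evB (fst g) a \<tau> (snd g) m))"
    using eq by (intro prod.cong) auto
  ultimately show ?thesis by (simp add: J_def)
qed

end

context bm2
begin

lemma path_bound:
  assumes \<omega>: "\<omega> \<in> space M" and \<tau>: "0 < \<tau>" and N: "0 < N"
    and hA: "\<And>j. j < N \<Longrightarrow> \<omega> \<in> evA b u \<tau> r j"
    and hB: "\<And>j m. j < N \<Longrightarrow> \<omega> \<in> evB b a \<tau> j m"
    and asum: "\<And>m. (\<Sum>l\<le>m. a l) \<le> \<eta>"
    and u0: "u 0 = 0"
    and uL: "\<And>s t. s \<in> {0..real N * \<tau>} \<Longrightarrow> t \<in> {0..real N * \<tau>} \<Longrightarrow> \<bar>u t - u s\<bar> \<le> Lu * \<bar>t - s\<bar>"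
    and Lu: "0 \<le> Lu"
    and t: "t \<in> {0..real N * \<tau>}"
  shows "\<bar>WB b t \<omega> - u t\<bar> \<le> real N * r + \<eta> + Lu * \<tau>"
proof -
  have r0: "0 \<le> r" using hA[OF N] unfolding evA_def by (auto intro: order_trans[OF abs_ge_zero])
  have grid: "\<bar>WB b (real j * \<tau>) \<omega> - u (real j * \<tau>)\<bar> \<le> real j * r" if "j \<le> N" for j
    using that
  proof (induction j)
    case 0 then show ?case using WB_0[OF \<omega>] u0 by simp
  next
    case (Suc j)
    have "\<bar>WB b (real (Suc j) * \<tau>) \<omega> - WB b (real j * \<tau>) \<omega> - (u (real (Suc j) * \<tau>) - u (real j * \<tau>))\<bar> \<le> r"
      using hA[of j] Suc.prems unfolding evA_def by auto
    moreover have "\<bar>WB b (real j * \<tau>) \<omega> - u (real j * \<tau>)\<bar> \<le> real j * r" using Suc by simp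
    ultimately show ?case by (simp add: algebra_simps)
  qed
  define j where "j = min (nat \<lfloor>t / \<tau>\<rfloor>) (N - 1)"
  have jN: "j < N" using N by (simp add: j_def)
  have t0: "0 \<le> t" "t \<le> real N * \<tau>" using t by auto
  have jl: "real j * \<tau> \<le> t"
  proof -
    have "real j \<le> real (nat \<lfloor>t / \<tau>\<rfloor>)" by (simp add: j_def)
    also have "\<dots> \<le> t / \<tau>" using t0 \<tau> by simp
    finally show ?thesis using \<tau> by (simp add: field_simps)
  qed
  have ju: "t \<le> real (Suc j) * \<tau>"
  proof (cases "nat \<lfloor>t / \<tau>\<rfloor> \<le> N - 1")
    case True
    then have "j = nat \<lfloor>t / \<tau>\<rfloor>" by (simp add: j_def)
    moreover have "t / \<tau> < real (nat \<lfloor>t / \<tau>\<rfloor>) + 1" using t0 \<tau> by linarith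
    ultimately have "t / \<tau> \<le> real (Suc j)" by simp
    then show ?thesis using \<tau> by (simp add: field_simps)
  next
    case False
    then have "j = N - 1" by (simp add: j_def)
    then have "real (Suc j) = real N" using N by simp
    then show ?thesis using t0 by simp
  qed
  have blk: "\<bar>WB b t \<omega> - WB b (real j * \<tau>) \<omega>\<bar> \<le> \<eta>"
  proof -
    let ?f = "\<lambda>s. \<bar>WB b s \<omega> - WB b (real j * \<tau>) \<omega>\<bar>"
    have "?f t \<le> \<eta>"
    proof (rule dyadic_dense[where h=\<tau> and p="real j * \<tau>" and f="?f" and C=\<eta> and s=t, OF \<tau>])
      show "continuous_on {real j * \<tau>..real j * \<tau> + \<tau>} ?f"
        by (intro continuous_intros WB_cont[OF \<omega>])
      show "t \<in> {real j * \<tau>..real j * \<tau> + \<tau>}" using jl ju by (simp add: algebra_simps)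
      fix m k :: nat assume k: "k \<le> 2 ^ m"
      have "?f (real j * \<tau> + real k * \<tau> / 2 ^ m) \<le> (\<Sum>l\<le>m. a l)"
      proof (rule chain_bound[where f="\<lambda>s. WB b s \<omega>" and p="real j * \<tau>" and h=\<tau> and a=a, OF _ k])
        fix l i :: nat assume l: "l \<le> m" and i: "i < 2 ^ l"
        show "\<bar>WB b (real j * \<tau> + real (Suc i) * \<tau> / 2 ^ l) \<omega> - WB b (real j * \<tau> + real i * \<tau> / 2 ^ l) \<omega>\<bar> \<le> a l"
            using hB[OF jN, of m] l i unfolding evB_def by auto
      qed
      then show "?f (real j * \<tau> + real k * \<tau> / 2 ^ m) \<le> \<eta>" using asum[of m] by simp
    qed
    then show ?thesis .
  qed
  have ub: "\<bar>u t - u (real j * \<tau>)\<bar> \<le> Lu * \<tau>"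
  proof -
    have "real j * \<tau> \<in> {0..real N * \<tau>}" using jl t0 \<tau> jN by auto
    then have "\<bar>u t - u (real j * \<tau>)\<bar> \<le> Lu * \<bar>t - real j * \<tau>\<bar>" using uL t by blast
    also have "\<dots> \<le> Lu * \<tau>" using jl ju Lu by (intro mult_left_mono) (auto simp: algebra_simps)
    finally show ?thesis .
  qed
  have "\<bar>WB b (real j * \<tau>) \<omega> - u (real j * \<tau>)\<bar> \<le> real N * r"
    using grid[of j] jN r0 by (smt (verit) mult_right_mono of_nat_le_iff less_imp_le)
  then show ?thesis using blk ub by linarith
qed

end

lemma geom_a:
  fixes \<eta> :: real assumes "0 \<le> \<eta>"
  shows "(\<Sum>l\<le>m. (\<eta> / 10) * (9 / 10) ^ l) \<le> \<eta>"
proof -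
  have "(\<Sum>l\<le>m. (9 / 10 :: real) ^ l) = (\<Sum>l<Suc m. (9 / 10 :: real) ^ l)"
    by (simp add: lessThan_Suc_atMost)
  also have "\<dots> = ((9/10) ^ Suc m - 1) / (9/10 - 1)" by (rule geometric_sum) simp
  also have "\<dots> = 10 * (1 - (9/10) ^ Suc m)" by (simp add: field_simps)
  also have "\<dots> \<le> 10" by simp
  finally have "(\<Sum>l\<le>m. (9 / 10 :: real) ^ l) \<le> 10" .
  then have "(\<eta> / 10) * (\<Sum>l\<le>m. (9 / 10 :: real) ^ l) \<le> (\<eta> / 10) * 10"
    using assms by (intro mult_left_mono) auto
  then show ?thesis by (simp add: sum_distrib_left)
qed

lemma tail_term:
  fixes \<tau> \<eta> :: real assumes "0 < \<eta>"
  shows "2 ^ l * (3 * (\<tau> / 2 ^ l)\<^sup>2 / ((\<eta> / 10) * (9 / 10) ^ l) ^ 4)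
       = (30000 * \<tau>\<^sup>2 / \<eta> ^ 4) * (5000 / 6561) ^ l"
proof -
  define A :: real where "A = 2 ^ l"
  define B :: real where "B = (9 / 10) ^ l"
  have A0: "0 < A" and B0: "0 < B" by (simp_all add: A_def B_def)
  have AB: "A * B ^ 4 = (6561 / 5000) ^ l"
  proof -
    have "A * B ^ 4 = 2 ^ l * ((9/10) ^ 4) ^ l" by (simp add: A_def B_def power_mult[symmetric] mult.commute)
    also have "\<dots> = (2 * (9/10) ^ 4) ^ l" by (simp add: power_mult_distrib)
    also have "(2 * (9/10::real) ^ 4) = 6561 / 5000" by (simp add: power_divide)
    finally show ?thesis .
  qed
  have q: "(5000 / 6561 :: real) ^ l = 1 / (A * B ^ 4)" by (simp add: AB power_one_over[symmetric])
  have "2 ^ l * (3 * (\<tau> / 2 ^ l)\<^sup>2 / ((\<eta> / 10) * (9 / 10) ^ l) ^ 4)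
      = A * (3 * (\<tau> / A)\<^sup>2 / ((\<eta> / 10) * B) ^ 4)" by (simp add: A_def B_def)
  also have "\<dots> = (30000 * \<tau>\<^sup>2 / \<eta> ^ 4) * (1 / (A * B ^ 4))"
    using A0 B0 assms by (simp add: field_simps power2_eq_square power_mult_distrib)
  finally show ?thesis by (simp add: q)
qed

lemma tail_sum:
  fixes \<tau> \<eta> :: real assumes "0 < \<eta>"
  shows "(\<Sum>l\<le>m. 2 ^ l * (3 * (\<tau> / 2 ^ l)\<^sup>2 / ((\<eta> / 10) * (9 / 10) ^ l) ^ 4)) \<le> 150000 * \<tau>\<^sup>2 / \<eta> ^ 4"
proof -
  have g: "(\<Sum>l\<le>m. (5000 / 6561 :: real) ^ l) \<le> 5"
  proof -
    have "(\<Sum>l\<le>m. (5000 / 6561 :: real) ^ l) = (\<Sum>l<Suc m. (5000 / 6561 :: real) ^ l)"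
      by (simp add: lessThan_Suc_atMost)
    also have "\<dots> = ((5000 / 6561) ^ Suc m - 1) / (5000 / 6561 - 1)" by (rule geometric_sum) simp
    also have "\<dots> = (6561 / 1561) * (1 - (5000 / 6561) ^ Suc m)" by (simp add: field_simps)
    also have "\<dots> \<le> 6561 / 1561" by simp
    also have "\<dots> \<le> 5" by simp
    finally show ?thesis .
  qed
  have c0: "0 \<le> 30000 * \<tau>\<^sup>2 / \<eta> ^ 4" using assms by simp
  have "(\<Sum>l\<le>m. 2 ^ l * (3 * (\<tau> / 2 ^ l)\<^sup>2 / ((\<eta> / 10) * (9 / 10) ^ l) ^ 4))
      = (30000 * \<tau>\<^sup>2 / \<eta> ^ 4) * (\<Sum>l\<le>m. (5000 / 6561) ^ l)"
    using tail_term[OF assms] by (simp add: sum_distrib_left)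
  also have "\<dots> \<le> (30000 * \<tau>\<^sup>2 / \<eta> ^ 4) * 5" using g c0 by (intro mult_left_mono) auto
  finally show ?thesis by simp
qed

lemma nd_low:
  fixes \<tau> T v Lu :: real
  assumes \<tau>: "0 < \<tau>" "\<tau> \<le> T" and v: "0 \<le> v" "v \<le> (Lu + 1) * \<tau>" and Lu: "0 \<le> Lu"
  shows "exp (- ((Lu + 1)\<^sup>2 * T / 2)) / sqrt (2 * pi * T) \<le> normal_density 0 (sqrt \<tau>) v"
proof -
  have nd: "normal_density 0 (sqrt \<tau>) v = 1 / sqrt (2 * pi * \<tau>) * exp (- v\<^sup>2 / (2 * \<tau>))"
    using \<tau> by (simp add: normal_density_def)
  have e: "- ((Lu + 1)\<^sup>2 * T / 2) \<le> - v\<^sup>2 / (2 * \<tau>)"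
  proof -
    have "v\<^sup>2 \<le> ((Lu + 1) * \<tau>)\<^sup>2" using v by (intro power_mono) auto
    then have "v\<^sup>2 / (2 * \<tau>) \<le> ((Lu + 1) * \<tau>)\<^sup>2 / (2 * \<tau>)" using \<tau> by (intro divide_right_mono) auto
    also have "\<dots> = (Lu + 1)\<^sup>2 * \<tau> / 2" using \<tau> by (simp add: power2_eq_square field_simps)
    also have "\<dots> \<le> (Lu + 1)\<^sup>2 * T / 2" using \<tau> by (intro divide_right_mono mult_left_mono) auto
    finally show ?thesis by simp
  qed
  have s: "1 / sqrt (2 * pi * T) \<le> 1 / sqrt (2 * pi * \<tau>)"
    using \<tau> by (intro divide_left_mono) (auto intro: real_sqrt_le_mono mult_pos_pos)
  have "exp (- ((Lu + 1)\<^sup>2 * T / 2)) / sqrt (2 * pi * T) = 1 / sqrt (2 * pi * T) * exp (- ((Lu + 1)\<^sup>2 * T / 2))"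
    by simp
  also have "\<dots> \<le> 1 / sqrt (2 * pi * \<tau>) * exp (- v\<^sup>2 / (2 * \<tau>))"
    using s e \<tau> by (intro mult_mono) auto
  finally show ?thesis using nd by simp
qed

context bm2
begin

lemma bm_support:
  fixes u :: "bool \<Rightarrow> real \<Rightarrow> real"
  assumes T: "0 < T" and \<delta>: "0 < \<delta>" and u0: "\<And>b. u b 0 = 0" and Lu: "0 \<le> Lu"
    and uL: "\<And>b s t. s \<in> {0..T} \<Longrightarrow> t \<in> {0..T} \<Longrightarrow> \<bar>u b t - u b s\<bar> \<le> Lu * \<bar>t - s\<bar>"
  shows "\<exists>G\<in>sets M. 0 < prob G \<and> (\<forall>\<omega>\<in>G. \<forall>b. \<forall>t\<in>{0..T}. \<bar>WB b t \<omega> - u b t\<bar> \<le> \<delta>)"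
proof -
  define \<eta> where "\<eta> = min \<delta> T / 3"
  have \<eta>0: "0 < \<eta>" and \<eta>T: "\<eta> \<le> T" and \<eta>\<delta>: "3 * \<eta> \<le> \<delta>" using T \<delta> by (auto simp: \<eta>_def)
  define a where "a l = (\<eta> / 10) * (9 / 10) ^ l" for l :: nat
  have a0: "\<And>l. 0 < a l" using \<eta>0 by (simp add: a_def)
  define K' where "K' = 2 * (exp (- ((Lu + 1)\<^sup>2 * T / 2)) / sqrt (2 * pi * T))"
  have K'0: "0 < K'" using T by (simp add: K'_def)
  define C0 where "C0 = 150000 / \<eta> ^ 4"
  have C00: "0 < C0" using \<eta>0 by (simp add: C0_def)
  define N :: nat where "N = nat \<lceil>max (Lu * T / \<eta>) (C0 * T\<^sup>2 / (K' * \<eta>))\<rceil> + 1"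
  have N0: "0 < N" by (simp add: N_def)
  have Nbig: "Lu * T / \<eta> < real N" "C0 * T\<^sup>2 / (K' * \<eta>) < real N"
    unfolding N_def by linarith+
  define \<tau> where "\<tau> = T / real N"
  have \<tau>0: "0 < \<tau>" using T N0 by (simp add: \<tau>_def)
  have \<tau>T: "\<tau> \<le> T" using T N0 by (simp add: \<tau>_def field_simps)
  have N\<tau>: "real N * \<tau> = T" using N0 by (simp add: \<tau>_def)
  define r where "r = \<eta> / real N"
  have r0: "0 < r" using \<eta>0 N0 by (simp add: r_def)
  have r\<tau>: "r \<le> \<tau>" using \<eta>T N0 by (simp add: r_def \<tau>_def divide_right_mono)
  have Nr: "real N * r = \<eta>" using N0 by (simp add: r_def)
  have Lu\<tau>: "Lu * \<tau> \<le> \<eta>"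
  proof -
    have "Lu * T < real N * \<eta>" using Nbig(1) \<eta>0 by (simp add: field_simps)
    then show ?thesis using N0 by (simp add: \<tau>_def field_simps)
  qed
  define p1 where "p1 = K' * r - C0 * \<tau>\<^sup>2"
  have p10: "0 < p1"
  proof -
    have "C0 * T\<^sup>2 < real N * (K' * \<eta>)" using Nbig(2) K'0 \<eta>0 by (simp add: field_simps)
    then have "C0 * T\<^sup>2 / (real N)\<^sup>2 < K' * \<eta> / real N" using N0 by (simp add: field_simps power2_eq_square)
    then show ?thesis unfolding p1_def r_def \<tau>_def by (simp add: power_divide)
  qed
  define J where "J = (UNIV :: bool set) \<times> {..<N}"
  define E where "E m g = evA (fst g) (u (fst g)) \<tau> r (snd g) \<inter> evB (fst g) a \<tau> (snd g) m" for m g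
  define Gm where "Gm m = (\<Inter>g\<in>J. E m g)" for m
  define G where "G = (\<Inter>m. Gm m)"
  have Esets: "E m g \<in> sets M" for m g by (simp add: E_def)
  have finJ: "finite J" and J0: "J \<noteq> {}" using N0 by (auto simp: J_def)
  have cardJ: "card J = 2 * N" by (simp add: J_def card_cartesian_product)
  have Gmsets: "Gm m \<in> sets M" for m unfolding Gm_def using finJ J0 Esets by auto
  have Gsets: "G \<in> sets M" unfolding G_def using Gmsets by auto
  have Eprob: "p1 \<le> prob (E m g)" if g: "g \<in> J" for m g
  proof -
    obtain b j where gbj: "g = (b, j)" and jN: "j < N" using g by (auto simp: J_def)
    have du: "\<bar>u b (real (Suc j) * \<tau>) - u b (real j * \<tau>)\<bar> \<le> Lu * \<tau>"
    proof -
      have "real (Suc j) * \<tau> \<le> T" using jN \<tau>0 N\<tau> by (metis Suc_leI mult_right_mono of_nat_le_iff less_imp_le)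
      moreover have "real (Suc j) * \<tau> = real j * \<tau> + \<tau>" by (simp add: algebra_simps)
      moreover have "0 \<le> real j * \<tau>" using \<tau>0 by simp
      ultimately have "real (Suc j) * \<tau> \<in> {0..T}" "real j * \<tau> \<in> {0..T}" using \<tau>0 unfolding atLeastAtMost_iff by (intro conjI; linarith)+
      then have "\<bar>u b (real (Suc j) * \<tau>) - u b (real j * \<tau>)\<bar> \<le> Lu * \<bar>real (Suc j) * \<tau> - real j * \<tau>\<bar>"
        using uL[of "real j * \<tau>" "real (Suc j) * \<tau>" b] by blast
      also have "\<bar>real (Suc j) * \<tau> - real j * \<tau>\<bar> = \<tau>" using \<tau>0 by (simp add: algebra_simps)
      finally show ?thesis .
    qed
    have pA: "K' * r \<le> prob (evA b (u b) \<tau> r j)"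
    proof -
      have "exp (- ((Lu + 1)\<^sup>2 * T / 2)) / sqrt (2 * pi * T) \<le> normal_density 0 (sqrt \<tau>) (\<bar>u b (real (Suc j) * \<tau>) - u b (real j * \<tau>)\<bar> + r)"
        by (rule nd_low[OF \<tau>0 \<tau>T _ _ Lu]) (use du r\<tau> r0 in \<open>auto simp: algebra_simps\<close>)
      then have "(2 * r) * (exp (- ((Lu + 1)\<^sup>2 * T / 2)) / sqrt (2 * pi * T)) \<le> (2 * r) * normal_density 0 (sqrt \<tau>) (\<bar>u b (real (Suc j) * \<tau>) - u b (real j * \<tau>)\<bar> + r)"
        using r0 by (intro mult_left_mono) auto
      moreover have "K' * r = (2 * r) * (exp (- ((Lu + 1)\<^sup>2 * T / 2)) / sqrt (2 * pi * T))" by (simp add: K'_def)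
      ultimately have "K' * r \<le> 2 * r * normal_density 0 (sqrt \<tau>) (\<bar>u b (real (Suc j) * \<tau>) - u b (real j * \<tau>)\<bar> + r)"
        by simp
      also have "\<dots> \<le> prob (evA b (u b) \<tau> r j)" by (rule evA_prob[OF \<tau>0 r0])
      finally show ?thesis .
    qed
    have pB: "prob (space M - evB b a \<tau> j m) \<le> C0 * \<tau>\<^sup>2"
    proof -
      have "prob (space M - evB b a \<tau> j m) \<le> (\<Sum>l\<le>m. 2 ^ l * (3 * (\<tau> / 2 ^ l)\<^sup>2 / (a l) ^ 4))"
        by (rule evB_prob[OF \<tau>0 a0])
      also have "\<dots> \<le> 150000 * \<tau>\<^sup>2 / \<eta> ^ 4" unfolding a_def by (rule tail_sum[OF \<eta>0])
      finally show ?thesis by (simp add: C0_def)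
    qed
    have "prob (evA b (u b) \<tau> r j) \<le> prob ((evA b (u b) \<tau> r j \<inter> evB b a \<tau> j m) \<union> (space M - evB b a \<tau> j m))"
      by (rule finite_measure_mono) (auto simp: evA_def)
    also have "\<dots> \<le> prob (evA b (u b) \<tau> r j \<inter> evB b a \<tau> j m) + prob (space M - evB b a \<tau> j m)"
      by (rule measure_Un_le) auto
    finally show ?thesis using pA pB unfolding E_def gbj p1_def by simp
  qed
  have Gmprob: "p1 ^ (2 * N) \<le> prob (Gm m)" for m
  proof -
    have "prob (Gm m) = (\<Prod>g\<in>J. prob (E m g))"
      unfolding Gm_def E_def J_def by (rule indep_blocks[OF \<tau>0 N0])
    moreover have "(\<Prod>g\<in>J. p1) \<le> (\<Prod>g\<in>J. prob (E m g))"
      by (rule prod_mono) (use Eprob p10 in auto)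
    ultimately show ?thesis using cardJ by simp
  qed
  have dec: "decseq Gm"
  proof (rule decseq_SucI)
    fix m
    have "E (Suc m) g \<subseteq> E m g" for g unfolding E_def evB_def by auto
    then show "Gm (Suc m) \<subseteq> Gm m" unfolding Gm_def by auto
  qed
  have lim: "(\<lambda>m. prob (Gm m)) \<longlonglongrightarrow> prob (\<Inter>(range Gm))"
    by (rule finite_Lim_measure_decseq) (use Gmsets dec in auto)
  have "p1 ^ (2 * N) \<le> prob G" unfolding G_def
    by (rule LIMSEQ_le_const[OF lim]) (use Gmprob in auto)
  moreover have "0 < p1 ^ (2 * N)" using p10 by simp
  ultimately have Gpos: "0 < prob G" by linarith
  have Gpath: "\<bar>WB b t \<omega> - u b t\<bar> \<le> \<delta>" if \<omega>: "\<omega> \<in> G" and t: "t \<in> {0..T}" for \<omega> b t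
  proof -
    have \<omega>s: "\<omega> \<in> space M" using \<omega> Gsets sets.sets_into_space by blast
    have inE: "\<omega> \<in> E m (b, j)" if "j < N" for m j
      using \<omega> that unfolding G_def Gm_def J_def by auto
    have "\<bar>WB b t \<omega> - u b t\<bar> \<le> real N * r + \<eta> + Lu * \<tau>"
    proof (rule path_bound[OF \<omega>s \<tau>0 N0])
      show "\<omega> \<in> evA b (u b) \<tau> r j" if "j < N" for j using inE[OF that, of 0] by (simp add: E_def)
      show "\<omega> \<in> evB b a \<tau> j m" if "j < N" for j m using inE[OF that, of m] by (simp add: E_def)
      show "(\<Sum>l\<le>m. a l) \<le> \<eta>" for m unfolding a_def by (rule geom_a) (use \<eta>0 in simp)
      show "u b 0 = 0" by (rule u0)
      show "\<bar>u b t' - u b s\<bar> \<le> Lu * \<bar>t' - s\<bar>" if "s \<in> {0..real N * \<tau>}" "t' \<in> {0..real N * \<tau>}" for s t'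
        using uL that N\<tau> by simp
      show "0 \<le> Lu" by (rule Lu)
      show "t \<in> {0..real N * \<tau>}" using t N\<tau> by simp
    qed
    also have "\<dots> \<le> \<delta>" using Nr Lu\<tau> \<eta>\<delta> by linarith
    finally show ?thesis .
  qed
  show ?thesis using Gsets Gpos Gpath by blast
qed

end

lemma C1_lip:
  fixes f :: "real \<Rightarrow> real"
  assumes "f C1_differentiable_on UNIV"
  shows "\<exists>L\<ge>0. \<forall>s\<in>{0..T}. \<forall>t\<in>{0..T}. \<bar>f t - f s\<bar> \<le> L * \<bar>t - s\<bar>"
proof -
  obtain D where d: "\<And>x. (f has_real_derivative D x) (at x)" and cD: "continuous_on UNIV D"
    using assms unfolding C1_differentiable_on_def has_real_derivative_iff_has_vector_derivative by blast
  have "compact (D ` {0..T})" by (intro compact_continuous_image continuous_on_subset[OF cD]) auto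
  then obtain B where B: "B > 0" "\<forall>y\<in>D ` {0..T}. norm y \<le> B" using compact_imp_bounded bounded_pos by metis
  have mv: "\<bar>f b - f a\<bar> \<le> B * (b - a)" if ab: "a \<in> {0..T}" "b \<in> {0..T}" "a < b" for a b
  proof -
    obtain z where z: "a < z" "z < b" "f b - f a = (b - a) * D z"
      using MVT2[OF ab(3), of f D] d by blast
    have "z \<in> {0..T}" using z ab by auto
    then have "\<bar>D z\<bar> \<le> B" using B by auto
    then have "\<bar>(b - a) * D z\<bar> \<le> (b - a) * B" using ab(3) by (simp add: abs_mult mult_left_mono)
    then show ?thesis using z(3) by (simp add: mult.commute)
  qed
  show ?thesis
  proof (intro exI[of _ B] conjI ballI)
    show "0 \<le> B" using B by simp
    fix s t assume s: "s \<in> {0..T}" and t: "t \<in> {0..T}"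
    consider "s < t" | "s = t" | "t < s" by linarith
    then show "\<bar>f t - f s\<bar> \<le> B * \<bar>t - s\<bar>"
    proof cases
      case 1 then show ?thesis using mv[OF s t] by simp
    next
      case 2 then show ?thesis using B by simp
    next
      case 3 then show ?thesis using mv[OF t s] by (simp add: abs_minus_commute)
    qed
  qed
qed

theorem lemma4p4:
  fixes \<gamma> h \<kappa>1 \<kappa>2 T :: real
    and M :: "'a measure"
    and W1 W2 :: "real \<Rightarrow> 'a \<Rightarrow> real"
    and U1 U2 xt yt zt kt :: "real \<Rightarrow> real"
  assumes "\<gamma> > 0" and "0 < h" and "h < 1" and "\<kappa>1 > 0" and "\<kappa>2 > 0" and "T > 0"
    and "std_BM2 M W1 W2"
    and "U1 C1_differentiable_on UNIV" and "U2 C1_differentiable_on UNIV"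
    and "U1 0 = 0" and "U2 0 = 0"
    and "reflected_solution \<gamma> h \<kappa>1 \<kappa>2 T U1 U2 xt yt zt kt"
  shows "\<forall>\<epsilon>>0. \<exists>\<epsilon>'>0. \<forall>p \<in> ball (xt 0, yt 0, zt 0) \<epsilon>'.
           \<forall>x y z k :: real \<Rightarrow> 'a \<Rightarrow> real.
             (\<forall>t\<in>{0..T}. x t \<in> borel_measurable M \<and> y t \<in> borel_measurable M \<and>
                          z t \<in> borel_measurable M \<and> k t \<in> borel_measurable M) \<and>
             (\<forall>\<omega>\<in>space M. (x 0 \<omega>, y 0 \<omega>, z 0 \<omega>) = p \<and>
                reflected_solution \<gamma> h \<kappa>1 \<kappa>2 T (\<lambda>t. W1 t \<omega>) (\<lambda>t. W2 t \<omega>)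
                  (\<lambda>t. x t \<omega>) (\<lambda>t. y t \<omega>) (\<lambda>t. z t \<omega>) (\<lambda>t. k t \<omega>))
             \<longrightarrow> measure M {\<omega>\<in>space M. \<forall>t\<in>{0..T}.
                    dist (x t \<omega>, y t \<omega>, z t \<omega>) (xt t, yt t, zt t) \<le> \<epsilon>} > 0"
proof (intro allI impI)
  fix \<epsilon> :: real assume \<epsilon>: "\<epsilon> > 0"
  note A = assms
  interpret bm2 M W1 W2 by unfold_locales (rule A(7))
  obtain \<epsilon>' \<delta> where \<epsilon>': "\<epsilon>' > 0" and \<delta>: "\<delta> > 0" and DS: "\<forall>V1 V2 x y z k. reflected_solution \<gamma> h \<kappa>1 \<kappa>2 T V1 V2 x y z k \<longrightarrow>
     dist (xt 0, yt 0, zt 0) (x 0, y 0, z 0) < \<epsilon>' \<longrightarrow>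
     (\<forall>t\<in>{0..T}. \<bar>(V1 t - V1 0) - (U1 t - U1 0)\<bar> \<le> \<delta> \<and> \<bar>(V2 t - V2 0) - (U2 t - U2 0)\<bar> \<le> \<delta>) \<longrightarrow>
     (\<forall>t\<in>{0..T}. dist (x t, y t, z t) (xt t, yt t, zt t) \<le> \<epsilon>)"
    using det_stability[OF A(1-6) A(12) \<epsilon>] by blast
  obtain L1 where L1: "L1 \<ge> 0" "\<forall>s\<in>{0..T}. \<forall>t\<in>{0..T}. \<bar>U1 t - U1 s\<bar> \<le> L1 * \<bar>t - s\<bar>"
    using C1_lip[OF A(8)] by blast
  obtain L2 where L2: "L2 \<ge> 0" "\<forall>s\<in>{0..T}. \<forall>t\<in>{0..T}. \<bar>U2 t - U2 s\<bar> \<le> L2 * \<bar>t - s\<bar>"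
    using C1_lip[OF A(9)] by blast
  define u where "u b = (if b then U1 else U2)" for b
  obtain G where G: "G \<in> sets M" "0 < prob G" and Gp: "\<forall>\<omega>\<in>G. \<forall>b. \<forall>t\<in>{0..T}. \<bar>WB b t \<omega> - u b t\<bar> \<le> \<delta>"
  proof -
    have "\<exists>G\<in>sets M. 0 < prob G \<and> (\<forall>\<omega>\<in>G. \<forall>b. \<forall>t\<in>{0..T}. \<bar>WB b t \<omega> - u b t\<bar> \<le> \<delta>)"
    proof (rule bm_support[OF A(6) \<delta>, of u "max L1 L2"])
      show "u b 0 = 0" for b using A(10,11) by (simp add: u_def)
      show "0 \<le> max L1 L2" using L1 by simp
      fix b s t assume st: "s \<in> {0..T}" "t \<in> {0..T}"
      have m1: "L1 * \<bar>t - s\<bar> \<le> max L1 L2 * \<bar>t - s\<bar>" "L2 * \<bar>t - s\<bar> \<le> max L1 L2 * \<bar>t - s\<bar>"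
        by (intro mult_right_mono; simp)+
      have "\<bar>U1 t - U1 s\<bar> \<le> L1 * \<bar>t - s\<bar>" "\<bar>U2 t - U2 s\<bar> \<le> L2 * \<bar>t - s\<bar>"
        using L1(2) L2(2) st by blast+
      then show "\<bar>u b t - u b s\<bar> \<le> max L1 L2 * \<bar>t - s\<bar>"
        using m1 unfolding u_def by (cases b) simp_all
    qed
    then show ?thesis using that by blast
  qed
  show "\<exists>\<epsilon>'>0. \<forall>p \<in> ball (xt 0, yt 0, zt 0) \<epsilon>'.
           \<forall>x y z k :: real \<Rightarrow> 'a \<Rightarrow> real.
             (\<forall>t\<in>{0..T}. x t \<in> borel_measurable M \<and> y t \<in> borel_measurable M \<and>
                          z t \<in> borel_measurable M \<and> k t \<in> borel_measurable M) \<and>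
             (\<forall>\<omega>\<in>space M. (x 0 \<omega>, y 0 \<omega>, z 0 \<omega>) = p \<and>
                reflected_solution \<gamma> h \<kappa>1 \<kappa>2 T (\<lambda>t. W1 t \<omega>) (\<lambda>t. W2 t \<omega>)
                  (\<lambda>t. x t \<omega>) (\<lambda>t. y t \<omega>) (\<lambda>t. z t \<omega>) (\<lambda>t. k t \<omega>))
             \<longrightarrow> measure M {\<omega>\<in>space M. \<forall>t\<in>{0..T}.
                    dist (x t \<omega>, y t \<omega>, z t \<omega>) (xt t, yt t, zt t) \<le> \<epsilon>} > 0"
  proof (rule exI[of _ \<epsilon>'], rule conjI[OF \<epsilon>'], intro ballI allI impI)
    fix p and x y z k :: "real \<Rightarrow> 'a \<Rightarrow> real"
    assume p: "p \<in> ball (xt 0, yt 0, zt 0) \<epsilon>'"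
    assume H: "(\<forall>t\<in>{0..T}. x t \<in> borel_measurable M \<and> y t \<in> borel_measurable M \<and>
                          z t \<in> borel_measurable M \<and> k t \<in> borel_measurable M) \<and>
             (\<forall>\<omega>\<in>space M. (x 0 \<omega>, y 0 \<omega>, z 0 \<omega>) = p \<and>
                reflected_solution \<gamma> h \<kappa>1 \<kappa>2 T (\<lambda>t. W1 t \<omega>) (\<lambda>t. W2 t \<omega>)
                  (\<lambda>t. x t \<omega>) (\<lambda>t. y t \<omega>) (\<lambda>t. z t \<omega>) (\<lambda>t. k t \<omega>))"
    have meas: "\<And>t. t \<in> {0..T} \<Longrightarrow> x t \<in> borel_measurable M \<and> y t \<in> borel_measurable M \<and> z t \<in> borel_measurable M"
      using H by blast
    have sol: "\<And>\<omega>. \<omega> \<in> space M \<Longrightarrow> (x 0 \<omega>, y 0 \<omega>, z 0 \<omega>) = p \<and>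
                reflected_solution \<gamma> h \<kappa>1 \<kappa>2 T (\<lambda>t. W1 t \<omega>) (\<lambda>t. W2 t \<omega>)
                  (\<lambda>t. x t \<omega>) (\<lambda>t. y t \<omega>) (\<lambda>t. z t \<omega>) (\<lambda>t. k t \<omega>)"
      using H by blast
    define S where "S = {\<omega>\<in>space M. \<forall>t\<in>{0..T}. dist (x t \<omega>, y t \<omega>, z t \<omega>) (xt t, yt t, zt t) \<le> \<epsilon>}"
    define Sd where "Sd = {\<omega>\<in>space M. \<forall>m::nat. \<forall>j\<in>{..(2::nat)^m}.
        dist (x (0 + real j * T / 2 ^ m) \<omega>, y (0 + real j * T / 2 ^ m) \<omega>, z (0 + real j * T / 2 ^ m) \<omega>)
             (xt (0 + real j * T / 2 ^ m), yt (0 + real j * T / 2 ^ m), zt (0 + real j * T / 2 ^ m)) \<le> \<epsilon>}"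
    have dyT: "0 + real j * T / 2 ^ m \<in> {0..T}" if "j \<le> 2 ^ m" for j m :: nat
    proof -
      have "real j \<le> 2 ^ m" using that by (metis of_nat_le_iff of_nat_numeral of_nat_power)
      then have "real j * T \<le> 2 ^ m * T" using A(6) by (intro mult_right_mono) auto
      then show ?thesis using A(6) by (simp add: field_simps)
    qed
    have SSd: "S = Sd"
    proof
      show "S \<subseteq> Sd" unfolding S_def Sd_def using dyT by auto
      show "Sd \<subseteq> S"
      proof
        fix \<omega> assume \<omega>: "\<omega> \<in> Sd"
        then have \<omega>s: "\<omega> \<in> space M" by (simp add: Sd_def)
        note R = rsD[OF conjunct2[OF sol[OF \<omega>s]]]
        note Rd = rsD[OF A(12)]
        have "dist (x t \<omega>, y t \<omega>, z t \<omega>) (xt t, yt t, zt t) \<le> \<epsilon>" if t: "t \<in> {0..T}" for t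
        proof (rule dyadic_dense[where h=T and p=0 and f="\<lambda>t. dist (x t \<omega>, y t \<omega>, z t \<omega>) (xt t, yt t, zt t)" and C=\<epsilon> and s=t, OF A(6)])
          show "continuous_on {0..0 + T} (\<lambda>t. dist (x t \<omega>, y t \<omega>, z t \<omega>) (xt t, yt t, zt t))"
            using R(1-3) Rd(1-3) by (simp, intro continuous_intros) auto
          show "t \<in> {0..0 + T}" using t by simp
          fix m j :: nat assume "j \<le> 2 ^ m"
          then show "dist (x (0 + real j * T / 2 ^ m) \<omega>, y (0 + real j * T / 2 ^ m) \<omega>, z (0 + real j * T / 2 ^ m) \<omega>)
             (xt (0 + real j * T / 2 ^ m), yt (0 + real j * T / 2 ^ m), zt (0 + real j * T / 2 ^ m)) \<le> \<epsilon>"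
            using \<omega> unfolding Sd_def by auto
        qed
        then show "\<omega> \<in> S" using \<omega>s unfolding S_def by auto
      qed
    qed
    have Ssets: "S \<in> sets M" unfolding SSd Sd_def
    proof (intro sets.sets_Collect_countable_All sets.sets_Collect_finite_All)
      fix m j :: nat assume "j \<in> {..(2::nat)^m}"
      then have tT: "0 + real j * T / 2 ^ m \<in> {0..T}" using dyT by auto
      define t where "t = 0 + real j * T / 2 ^ m"
      have [measurable]: "x t \<in> borel_measurable M" "y t \<in> borel_measurable M" "z t \<in> borel_measurable M"
        using meas tT unfolding t_def by auto
      show "{\<omega>\<in>space M. dist (x (0 + real j * T / 2 ^ m) \<omega>, y (0 + real j * T / 2 ^ m) \<omega>, z (0 + real j * T / 2 ^ m) \<omega>)
             (xt (0 + real j * T / 2 ^ m), yt (0 + real j * T / 2 ^ m), zt (0 + real j * T / 2 ^ m)) \<le> \<epsilon>} \<in> sets M"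
        unfolding t_def[symmetric] by measurable
    qed auto
    have GS: "G \<subseteq> S"
    proof
      fix \<omega> assume \<omega>: "\<omega> \<in> G"
      have \<omega>s: "\<omega> \<in> space M" using \<omega> G(1) sets.sets_into_space by blast
      have s: "(x 0 \<omega>, y 0 \<omega>, z 0 \<omega>) = p" and rs: "reflected_solution \<gamma> h \<kappa>1 \<kappa>2 T (\<lambda>t. W1 t \<omega>) (\<lambda>t. W2 t \<omega>)
                  (\<lambda>t. x t \<omega>) (\<lambda>t. y t \<omega>) (\<lambda>t. z t \<omega>) (\<lambda>t. k t \<omega>)" using sol[OF \<omega>s] by auto
      have d0: "dist (xt 0, yt 0, zt 0) (x 0 \<omega>, y 0 \<omega>, z 0 \<omega>) < \<epsilon>'" using p s by simp
      have Vc: "\<forall>t\<in>{0..T}. \<bar>(W1 t \<omega> - W1 0 \<omega>) - (U1 t - U1 0)\<bar> \<le> \<delta> \<and> \<bar>(W2 t \<omega> - W2 0 \<omega>) - (U2 t - U2 0)\<bar> \<le> \<delta>"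
      proof
        fix t assume t: "t \<in> {0..T}"
        have w0: "W1 0 \<omega> = 0" "W2 0 \<omega> = 0" using WB_0[OF \<omega>s, of True] WB_0[OF \<omega>s, of False] by (simp_all add: WB_def)
        have "WB True t \<omega> = W1 t \<omega>" "WB False t \<omega> = W2 t \<omega>" using t by (simp_all add: WB_eq)
        then show "\<bar>(W1 t \<omega> - W1 0 \<omega>) - (U1 t - U1 0)\<bar> \<le> \<delta> \<and> \<bar>(W2 t \<omega> - W2 0 \<omega>) - (U2 t - U2 0)\<bar> \<le> \<delta>"
        proof -
          have g: "\<bar>WB True t \<omega> - u True t\<bar> \<le> \<delta>" "\<bar>WB False t \<omega> - u False t\<bar> \<le> \<delta>"
            using Gp \<omega> t by blast+
          then show ?thesis using w0 A(10,11) \<open>WB True t \<omega> = W1 t \<omega>\<close> \<open>WB False t \<omega> = W2 t \<omega>\<close>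
            unfolding u_def by simp
        qed
      qed
      have "\<forall>t\<in>{0..T}. dist (x t \<omega>, y t \<omega>, z t \<omega>) (xt t, yt t, zt t) \<le> \<epsilon>"
        using DS rs d0 Vc by blast
      then show "\<omega> \<in> S" using \<omega>s by (simp add: S_def)
    qed
    have "prob G \<le> prob S" by (rule finite_measure_mono[OF GS Ssets])
    then show "measure M {\<omega>\<in>space M. \<forall>t\<in>{0..T}. dist (x t \<omega>, y t \<omega>, z t \<omega>) (xt t, yt t, zt t) \<le> \<epsilon>} > 0"
      using G(2) unfolding S_def by linarith
  qed
qed

end
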